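(* Let $n\ge1$ and $n'=\lfloor n/2\rfloor$. The ring $R_n$ is generated as an $R'_n$-module by the set $\{h_{i_1}\cdots h_{i_{n'}}\mid i_1,\dots,i_{n'}\in\mathbb Z_{\ge0}\}$.
   Context: $R_n=\mathbb C[x_1,\dots,x_n]^{S_n}$; $e_k$ and $h_k$ denote the elementary and complete homogeneous symmetric polynomials in $x_1,\dots,x_n$ ($h_0=1$). $R'_n=\mathbb C[e_{2j+1}\mid 0\le j\le (n-1)/2]\subset R_n$. *)

theory Defs
  imports Complex_Main "HOL-Library.Poly_Mapping" "HOL-Combinatorics.Permutations"
begin

text \<open>Variables are indexed 0, ..., n-1 (x_1..x_n of the paper).\<close>

type_synonym mpoly = "(nat \<Rightarrow>\<^sub>0 nat) \<Rightarrow>\<^sub>0 complex"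

definition Var :: "nat \<Rightarrow> mpoly" where
  "Var i = Poly_Mapping.single (Poly_Mapping.single i 1) 1"

definition Const :: "complex \<Rightarrow> mpoly" where
  "Const c = Poly_Mapping.single 0 c"

definition in_vars :: "nat \<Rightarrow> mpoly \<Rightarrow> bool" where
  "in_vars n p \<longleftrightarrow> (\<forall>m \<in> Poly_Mapping.keys p. Poly_Mapping.keys m \<subseteq> {..<n})"

definition Rsym :: "nat \<Rightarrow> mpoly set" where
  "Rsym n = {p. in_vars n p \<and>
     (\<forall>\<sigma>. \<sigma> permutes {..<n} \<longrightarrow>
        (\<forall>m. Poly_Mapping.lookup p (Poly_Mapping.map_key \<sigma> m) = Poly_Mapping.lookup p m))}"

definition elem_sym :: "nat \<Rightarrow> nat \<Rightarrow> mpoly" where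
  "elem_sym n k = (\<Sum>S \<in> {S. S \<subseteq> {..<n} \<and> card S = k}. \<Prod>i\<in>S. Var i)"

definition compl_sym :: "nat \<Rightarrow> nat \<Rightarrow> mpoly" where
  "compl_sym n k = (\<Sum>m \<in> {m. Poly_Mapping.keys m \<subseteq> {..<n} \<and>
        (\<Sum>i<n. Poly_Mapping.lookup m i) = k}. Poly_Mapping.single m 1)"

inductive_set subalg :: "mpoly set \<Rightarrow> mpoly set" for G where
  const: "Const c \<in> subalg G"
| gen: "g \<in> G \<Longrightarrow> g \<in> subalg G"
| add: "p \<in> subalg G \<Longrightarrow> q \<in> subalg G \<Longrightarrow> p + q \<in> subalg G"
| mult: "p \<in> subalg G \<Longrightarrow> q \<in> subalg G \<Longrightarrow> p * q \<in> subalg G"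

definition Rodd :: "nat \<Rightarrow> mpoly set" where
  "Rodd n = subalg {elem_sym n (2*j+1) | j. 2*j+1 \<le> n}"

definition module_span :: "mpoly set \<Rightarrow> mpoly set \<Rightarrow> mpoly set" where
  "module_span A M = {(\<Sum>i\<in>F. r i * g i) | F r g.
      finite (F :: nat set) \<and> (\<forall>i\<in>F. r i \<in> A \<and> g i \<in> M)}"

end

theory Submission
  imports Defs
begin

abbreviation lk where "lk \<equiv> Poly_Mapping.lookup"
abbreviation ks where "ks \<equiv> Poly_Mapping.keys"
abbreviation sg where "sg \<equiv> Poly_Mapping.single"

lemma pm_expand: "(p :: 'a \<Rightarrow>\<^sub>0 'b::comm_monoid_add) = (\<Sum>\<gamma>\<in>ks p. sg \<gamma> (lk p \<gamma>))"
proof (rule poly_mapping_eqI)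
  fix k show "lk p k = lk (\<Sum>\<gamma>\<in>ks p. sg \<gamma> (lk p \<gamma>)) k"
    by (cases "k \<in> ks p") (auto simp: lookup_sum lookup_single when_def in_keys_iff)
qed

lemma mult_expand: "(p::mpoly) * q = (\<Sum>\<alpha>\<in>ks p. \<Sum>\<beta>\<in>ks q. sg (\<alpha>+\<beta>) (lk p \<alpha> * lk q \<beta>))"
proof -
  have "p * q = (\<Sum>\<alpha>\<in>ks p. sg \<alpha> (lk p \<alpha>)) * (\<Sum>\<beta>\<in>ks q. sg \<beta> (lk q \<beta>))"
    by (simp only: pm_expand[symmetric])
  also have "\<dots> = (\<Sum>\<alpha>\<in>ks p. \<Sum>\<beta>\<in>ks q. sg (\<alpha>+\<beta>) (lk p \<alpha> * lk q \<beta>))"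
    by (simp add: sum_product mult_single)
  finally show ?thesis .
qed

lemma lookup_mult_expand: "lk ((p::mpoly) * q) \<gamma> =
   (\<Sum>\<alpha>\<in>ks p. \<Sum>\<beta>\<in>ks q. (lk p \<alpha> * lk q \<beta> when \<alpha>+\<beta> = \<gamma>))"
  by (subst mult_expand) (simp add: lookup_sum lookup_single)

lemma Const_0[simp]: "Const 0 = 0" by (simp add: Const_def)
lemma Const_1[simp]: "Const 1 = 1" by (simp add: Const_def)
lemma Const_add: "Const (a + b) = Const a + Const b" by (simp add: Const_def single_add)
lemma Const_mult: "Const (a * b) = Const a * Const b" by (simp add: Const_def mult_single)
lemma Const_minus: "Const (- a) = - Const a" by (simp add: Const_def single_uminus)
lemma Const_diff: "Const (a - b) = Const a - Const b" by (simp add: Const_def single_diff)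

lemma lookup_Const_mult: "lk (Const c * p) \<gamma> = c * lk p \<gamma>"
proof (cases "c = 0")
  case True then show ?thesis by simp
next
  case False
  show ?thesis
  proof (cases "\<gamma> \<in> ks p")
    case True
    then show ?thesis using False
      by (simp add: lookup_mult_expand Const_def when_def sum.delta)
  next
    case F2: False
    then show ?thesis using False
      by (auto simp: lookup_mult_expand Const_def when_def sum.delta in_keys_iff)
  qed
qed

lemma keys_Const_mult: "ks (Const c * p) \<subseteq> ks p"
  by (auto simp: in_keys_iff lookup_Const_mult)

lemma Var_power: "Var i ^ j = sg (sg i j) 1"
  by (induction j) (simp_all add: Var_def mult_single flip: single_add)

lemma prod_single: "finite S \<Longrightarrow> (\<Prod>i\<in>S. sg (f i) (c i) :: mpoly) = sg (\<Sum>i\<in>S. f i) (\<Prod>i\<in>S. c i)"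
  by (induction S rule: finite_induct) (simp_all add: mult_single)

definition ind :: "nat set \<Rightarrow> (nat \<Rightarrow>\<^sub>0 nat)" where
  "ind S = (\<Sum>i\<in>S. sg i 1)"

lemma lookup_ind: "finite S \<Longrightarrow> lk (ind S) i = (if i \<in> S then 1 else 0)"
  by (simp add: ind_def lookup_sum lookup_single when_def)

lemma keys_ind: "finite S \<Longrightarrow> ks (ind S) = S"
  by (auto simp: in_keys_iff lookup_ind split: if_splits)

definition mdeg :: "(nat \<Rightarrow>\<^sub>0 nat) \<Rightarrow> nat" where
  "mdeg \<gamma> = sum (lk \<gamma>) (ks \<gamma>)"

lemma mdeg_superset: "finite A \<Longrightarrow> ks \<gamma> \<subseteq> A \<Longrightarrow> mdeg \<gamma> = sum (lk \<gamma>) A"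
  unfolding mdeg_def by (rule sum.mono_neutral_left) (auto simp: in_keys_iff)

lemma mdeg_add: "mdeg (a + b) = mdeg a + mdeg b"
proof -
  have f: "finite (ks a \<union> ks b)" by simp
  have "mdeg (a+b) = sum (lk (a+b)) (ks a \<union> ks b)"
    using keys_add[of a b] by (intro mdeg_superset[OF f])
  also have "\<dots> = sum (lk a) (ks a \<union> ks b) + sum (lk b) (ks a \<union> ks b)"
    by (simp add: lookup_add sum.distrib)
  also have "\<dots> = mdeg a + mdeg b"
    using mdeg_superset[OF f, of a] mdeg_superset[OF f, of b] by auto
  finally show ?thesis .
qed

lemma mdeg_zero[simp]: "mdeg 0 = 0" by (simp add: mdeg_def)

lemma mdeg_single[simp]: "mdeg (sg i j) = j" by (simp add: mdeg_def)

lemma mdeg_ind: "finite S \<Longrightarrow> mdeg (ind S) = card S"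
  by (simp add: mdeg_def keys_ind lookup_ind)

lemma mdeg_sum: "finite A \<Longrightarrow> mdeg (\<Sum>i\<in>A. f i) = (\<Sum>i\<in>A. mdeg (f i))"
  by (induction A rule: finite_induct) (simp_all add: mdeg_add)

lemma lookup_le_mdeg: "lk \<gamma> i \<le> mdeg \<gamma>"
proof (cases "i \<in> ks \<gamma>")
  case True then show ?thesis unfolding mdeg_def by (intro member_le_sum) auto
next
  case False then show ?thesis by (simp add: in_keys_iff)
qed

lemma finite_monos: assumes "finite A" shows "finite {\<gamma>::nat \<Rightarrow>\<^sub>0 nat. ks \<gamma> \<subseteq> A \<and> mdeg \<gamma> \<le> D}"
proof -
  have inj: "inj (lk :: (nat \<Rightarrow>\<^sub>0 nat) \<Rightarrow> _)" by (rule injI, rule poly_mapping_eqI) simp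
  have "lk ` {\<gamma>::nat \<Rightarrow>\<^sub>0 nat. ks \<gamma> \<subseteq> A \<and> mdeg \<gamma> \<le> D} \<subseteq>
     {f. \<forall>x. (x \<in> A \<longrightarrow> f x \<in> {..D}) \<and> (x \<notin> A \<longrightarrow> f x = 0)}"
  proof (rule image_subsetI)
    fix \<gamma> assume "\<gamma> \<in> {\<gamma>::nat \<Rightarrow>\<^sub>0 nat. ks \<gamma> \<subseteq> A \<and> mdeg \<gamma> \<le> D}"
    then have k: "ks \<gamma> \<subseteq> A" and d: "mdeg \<gamma> \<le> D" by auto
    show "lk \<gamma> \<in> {f. \<forall>x. (x \<in> A \<longrightarrow> f x \<in> {..D}) \<and> (x \<notin> A \<longrightarrow> f x = 0)}"
    proof (intro CollectI allI conjI impI)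
      fix x assume "x \<in> A" show "lk \<gamma> x \<in> {..D}" using lookup_le_mdeg[of \<gamma> x] d by simp
    next
      fix x assume "x \<notin> A" then have "x \<notin> ks \<gamma>" using k by blast
      then show "lk \<gamma> x = 0" by (simp add: in_keys_iff)
    qed
  qed
  moreover have "finite {f. \<forall>x. (x \<in> A \<longrightarrow> f x \<in> {..D}) \<and> (x \<notin> A \<longrightarrow> f x = (0::nat))}"
    by (rule finite_set_of_finite_funs) (use assms in auto)
  ultimately have "finite (lk ` {\<gamma>::nat \<Rightarrow>\<^sub>0 nat. ks \<gamma> \<subseteq> A \<and> mdeg \<gamma> \<le> D})"
    by (rule finite_subset)
  then show ?thesis using inj by (rule finite_imageD[OF _ inj_on_subset]) auto
qed

lemma ind_eq_iff: "finite S \<Longrightarrow> ind S = \<gamma> \<longleftrightarrow> (S = ks \<gamma> \<and> (\<forall>i\<in>ks \<gamma>. lk \<gamma> i = 1))"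
proof
  assume "finite S" "ind S = \<gamma>" then show "S = ks \<gamma> \<and> (\<forall>i\<in>ks \<gamma>. lk \<gamma> i = 1)"
    by (auto simp: keys_ind lookup_ind)
next
  assume f: "finite S" and h: "S = ks \<gamma> \<and> (\<forall>i\<in>ks \<gamma>. lk \<gamma> i = 1)"
  show "ind S = \<gamma>"
  proof (rule poly_mapping_eqI)
    fix i show "lk (ind S) i = lk \<gamma> i" using h f by (auto simp: lookup_ind in_keys_iff)
  qed
qed

definition esets :: "nat \<Rightarrow> nat \<Rightarrow> nat set set" where
  "esets n k = {S. S \<subseteq> {..<n} \<and> card S = k}"

lemma finite_esets: "finite (esets n k)"
  unfolding esets_def by (rule finite_subset[of _ "Pow {..<n}"]) auto

lemma elem_sym_eq: "elem_sym n k = (\<Sum>S\<in>esets n k. sg (ind S) 1)"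
proof -
  have "(\<Prod>i\<in>S. Var i) = sg (ind S) 1" if "S \<in> esets n k" for S
  proof -
    have "finite S" using that by (auto simp: esets_def intro: finite_subset)
    then show ?thesis by (simp add: Var_def prod_single ind_def)
  qed
  then show ?thesis unfolding elem_sym_def esets_def[symmetric] by (rule sum.cong[OF refl])
qed

definition is01 :: "(nat \<Rightarrow>\<^sub>0 nat) \<Rightarrow> bool" where
  "is01 \<gamma> \<longleftrightarrow> (\<forall>i\<in>ks \<gamma>. lk \<gamma> i = 1)"

lemma lookup_elem_sym: "lk (elem_sym n k) \<gamma> =
   (1 when ks \<gamma> \<subseteq> {..<n} \<and> card (ks \<gamma>) = k \<and> is01 \<gamma>)"
proof -
  have "lk (elem_sym n k) \<gamma> = (\<Sum>S\<in>esets n k. (1 when ind S = \<gamma>))"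
    by (simp add: elem_sym_eq lookup_sum lookup_single)
  also have "\<dots> = (\<Sum>S\<in>esets n k. (1 when S = ks \<gamma> \<and> is01 \<gamma>))"
  proof (rule sum.cong[OF refl])
    fix S assume "S \<in> esets n k"
    then have "finite S" by (auto simp: esets_def intro: finite_subset)
    then show "(1 when ind S = \<gamma>) = (1 when S = ks \<gamma> \<and> is01 \<gamma>)"
      by (simp add: ind_eq_iff is01_def)
  qed
  also have "\<dots> = (1 when ks \<gamma> \<in> esets n k \<and> is01 \<gamma>)"
    by (cases "is01 \<gamma>") (simp_all add: when_def sum.delta' finite_esets)
  finally show ?thesis by (simp add: esets_def conj_assoc)
qed

definition hmons :: "nat \<Rightarrow> nat \<Rightarrow> (nat \<Rightarrow>\<^sub>0 nat) set" where
  "hmons n k = {m. ks m \<subseteq> {..<n} \<and> (\<Sum>i<n. lk m i) = k}"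

lemma hmons_alt: "hmons n k = {m. ks m \<subseteq> {..<n} \<and> mdeg m = k}"
  unfolding hmons_def using mdeg_superset[of "{..<n}"] by auto

lemma finite_hmons: "finite (hmons n k)"
  unfolding hmons_alt by (rule finite_subset[OF _ finite_monos[of "{..<n}" k]]) auto

lemma lookup_compl_sym: "lk (compl_sym n k) \<gamma> = (1 when ks \<gamma> \<subseteq> {..<n} \<and> mdeg \<gamma> = k)"
proof -
  have "lk (compl_sym n k) \<gamma> = (\<Sum>m\<in>hmons n k. (1 when m = \<gamma>))"
    by (simp add: compl_sym_def hmons_def[symmetric] lookup_sum lookup_single)
  also have "\<dots> = (1 when \<gamma> \<in> hmons n k)"
    using finite_hmons by (auto simp: when_def)
  finally show ?thesis by (simp add: hmons_alt)
qed

lemma compl_sym_0: "compl_sym n 0 = 1"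
proof (rule poly_mapping_eqI)
  fix \<gamma>
  have iff: "mdeg \<gamma> = 0 \<longleftrightarrow> \<gamma> = 0"
  proof
    assume "mdeg \<gamma> = 0"
    then have "\<forall>i\<in>ks \<gamma>. lk \<gamma> i = 0" by (simp add: mdeg_def)
    then show "\<gamma> = 0" by (metis in_keys_iff keys_eq_empty equals0I)
  qed simp
  then show "lk (compl_sym n 0) \<gamma> = lk 1 \<gamma>"
  proof (cases "\<gamma> = 0")
    case True then show ?thesis by (simp add: lookup_compl_sym lookup_one)
  next
    case False
    then have "mdeg \<gamma> \<noteq> 0" using iff by blast
    then show ?thesis using False by (simp add: lookup_compl_sym lookup_one)
  qed
qed

lemma lookup_map_key_perm: assumes "\<sigma> permutes A" shows "lk (Poly_Mapping.map_key \<sigma> \<gamma>) i = lk \<gamma> (\<sigma> i)"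
  by (simp add: map_key.rep_eq[OF permutes_inj[OF assms]])

lemma map_key_inj_perm: assumes "\<sigma> permutes A"
  shows "inj (Poly_Mapping.map_key \<sigma> :: (nat \<Rightarrow>\<^sub>0 'b::zero) \<Rightarrow> _)"
proof (rule injI)
  fix x y :: "nat \<Rightarrow>\<^sub>0 'b" assume "Poly_Mapping.map_key \<sigma> x = Poly_Mapping.map_key \<sigma> y"
  then have "\<And>i. lk x (\<sigma> i) = lk y (\<sigma> i)" by (metis lookup_map_key_perm[OF assms])
  then have "\<And>j. lk x j = lk y j" by (metis permutes_inverses(1)[OF assms])
  then show "x = y" by (rule poly_mapping_eqI)
qed

lemma map_key_add_perm: "\<sigma> permutes A \<Longrightarrow>
  Poly_Mapping.map_key \<sigma> (a + b) = Poly_Mapping.map_key \<sigma> a + Poly_Mapping.map_key \<sigma> (b :: nat \<Rightarrow>\<^sub>0 nat)"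
  by (rule poly_mapping_eqI) (simp add: lookup_map_key_perm lookup_add)

lemma map_key_inv_perm: "\<sigma> permutes A \<Longrightarrow>
  Poly_Mapping.map_key \<sigma> (Poly_Mapping.map_key (inv \<sigma>) (a :: nat \<Rightarrow>\<^sub>0 nat)) = a"
  by (rule poly_mapping_eqI) (simp add: lookup_map_key_perm[OF permutes_inv] lookup_map_key_perm permutes_inverses)

lemma keys_map_key_perm: assumes "\<sigma> permutes {..<n}"
  shows "ks (Poly_Mapping.map_key \<sigma> (\<gamma> :: nat \<Rightarrow>\<^sub>0 nat)) \<subseteq> {..<n} \<longleftrightarrow> ks \<gamma> \<subseteq> {..<n}"
proof
  assume h: "ks (Poly_Mapping.map_key \<sigma> \<gamma>) \<subseteq> {..<n}"
  show "ks \<gamma> \<subseteq> {..<n}"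
  proof
    fix j assume "j \<in> ks \<gamma>"
    then have "inv \<sigma> j \<in> ks (Poly_Mapping.map_key \<sigma> \<gamma>)"
      by (simp add: in_keys_iff lookup_map_key_perm[OF assms] permutes_inverses[OF assms])
    then have "inv \<sigma> j \<in> {..<n}" using h by blast
    then show "j \<in> {..<n}" using permutes_in_image[OF permutes_inv[OF assms]] by blast
  qed
next
  assume h: "ks \<gamma> \<subseteq> {..<n}"
  show "ks (Poly_Mapping.map_key \<sigma> \<gamma>) \<subseteq> {..<n}"
  proof
    fix j assume "j \<in> ks (Poly_Mapping.map_key \<sigma> \<gamma>)"
    then have "\<sigma> j \<in> ks \<gamma>" by (simp add: in_keys_iff lookup_map_key_perm[OF assms])
    then show "j \<in> {..<n}" using h permutes_in_image[OF assms] by blast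
  qed
qed

lemma mdeg_map_key_perm: assumes "\<sigma> permutes {..<n}" "ks \<gamma> \<subseteq> {..<n}"
  shows "mdeg (Poly_Mapping.map_key \<sigma> \<gamma>) = mdeg \<gamma>"
proof -
  have k: "ks (Poly_Mapping.map_key \<sigma> \<gamma>) \<subseteq> {..<n}" using keys_map_key_perm[OF assms(1)] assms(2) by blast
  have "mdeg (Poly_Mapping.map_key \<sigma> \<gamma>) = (\<Sum>i<n. lk \<gamma> (\<sigma> i))"
    using mdeg_superset[OF _ k] by (simp add: lookup_map_key_perm[OF assms(1)])
  also have "\<dots> = (\<Sum>i<n. lk \<gamma> i)"
    using sum.permute[OF assms(1), of "lk \<gamma>"] by (simp add: comp_def)
  also have "\<dots> = mdeg \<gamma>" using mdeg_superset[OF _ assms(2)] by simp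
  finally show ?thesis .
qed

lemma le1_map_key_perm: assumes "\<sigma> permutes A"
  shows "(\<forall>i. lk (Poly_Mapping.map_key \<sigma> \<gamma>) i \<le> (1::nat)) \<longleftrightarrow> (\<forall>i. lk \<gamma> i \<le> 1)"
proof -
  have "(\<forall>i. lk (Poly_Mapping.map_key \<sigma> \<gamma>) i \<le> (1::nat)) \<longleftrightarrow> (\<forall>i. lk \<gamma> (\<sigma> i) \<le> 1)"
    by (simp add: lookup_map_key_perm[OF assms])
  also have "\<dots> \<longleftrightarrow> (\<forall>i. lk \<gamma> i \<le> 1)"
  proof
    assume h: "\<forall>i. lk \<gamma> (\<sigma> i) \<le> 1"
    show "\<forall>i. lk \<gamma> i \<le> 1"
    proof
      fix i show "lk \<gamma> i \<le> 1" using h[rule_format, of "inv \<sigma> i"] by (simp add: permutes_inverses[OF assms])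
    qed
  qed simp
  finally show ?thesis .
qed

lemma is01_iff: "is01 \<gamma> \<longleftrightarrow> (\<forall>i. lk \<gamma> i \<le> 1)"
proof -
  have "is01 \<gamma> \<longleftrightarrow> (\<forall>i. lk \<gamma> i \<noteq> 0 \<longrightarrow> lk \<gamma> i = 1)" by (auto simp: is01_def in_keys_iff)
  also have "\<dots> \<longleftrightarrow> (\<forall>i. lk \<gamma> i \<le> 1)" by (intro iff_allI) arith
  finally show ?thesis .
qed

lemma card_keys_01: "is01 \<gamma> \<Longrightarrow> card (ks \<gamma>) = mdeg \<gamma>"
  by (simp add: mdeg_def is01_def)

lemma lookup_elem_sym2: "lk (elem_sym n k) \<gamma> =
   (1 when ks \<gamma> \<subseteq> {..<n} \<and> mdeg \<gamma> = k \<and> (\<forall>i. lk \<gamma> i \<le> 1))"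
  unfolding lookup_elem_sym using card_keys_01 is01_iff by (auto intro: when_cong)

definition symm :: "nat \<Rightarrow> mpoly \<Rightarrow> bool" where
  "symm n p \<longleftrightarrow> (\<forall>\<sigma>. \<sigma> permutes {..<n} \<longrightarrow> (\<forall>m. lk p (Poly_Mapping.map_key \<sigma> m) = lk p m))"

lemma Rsym_iff: "p \<in> Rsym n \<longleftrightarrow> in_vars n p \<and> symm n p"
  by (simp add: Rsym_def symm_def)

lemma symm_elem_sym: "symm n (elem_sym n k)"
  unfolding symm_def lookup_elem_sym2
proof (intro allI impI)
  fix \<sigma> :: "nat \<Rightarrow> nat" and m :: "nat \<Rightarrow>\<^sub>0 nat" assume s: "\<sigma> permutes {..<n}"
  show "(1 when ks (Poly_Mapping.map_key \<sigma> m) \<subseteq> {..<n} \<and> mdeg (Poly_Mapping.map_key \<sigma> m) = k \<and>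
           (\<forall>i. lk (Poly_Mapping.map_key \<sigma> m) i \<le> 1)) =
        (1 when ks m \<subseteq> {..<n} \<and> mdeg m = k \<and> (\<forall>i. lk m i \<le> 1))"
  proof (cases "ks m \<subseteq> {..<n}")
    case True
    then show ?thesis using keys_map_key_perm[OF s, of m] mdeg_map_key_perm[OF s True] le1_map_key_perm[OF s, of m]
      by simp
  next
    case False
    then show ?thesis using keys_map_key_perm[OF s, of m] by simp
  qed
qed

lemma symm_compl_sym: "symm n (compl_sym n k)"
  unfolding symm_def lookup_compl_sym
proof (intro allI impI)
  fix \<sigma> :: "nat \<Rightarrow> nat" and m :: "nat \<Rightarrow>\<^sub>0 nat" assume s: "\<sigma> permutes {..<n}"
  show "(1 when ks (Poly_Mapping.map_key \<sigma> m) \<subseteq> {..<n} \<and> mdeg (Poly_Mapping.map_key \<sigma> m) = k) =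
        (1 when ks m \<subseteq> {..<n} \<and> mdeg m = k)"
  proof (cases "ks m \<subseteq> {..<n}")
    case True
    then show ?thesis using keys_map_key_perm[OF s, of m] mdeg_map_key_perm[OF s True] by simp
  next
    case False
    then show ?thesis using keys_map_key_perm[OF s, of m] by simp
  qed
qed

lemma symm_add: "symm n p \<Longrightarrow> symm n q \<Longrightarrow> symm n (p + q)"
  by (simp add: symm_def lookup_add)

lemma symm_diff: "symm n p \<Longrightarrow> symm n q \<Longrightarrow> symm n (p - q)"
  by (simp add: symm_def lookup_minus)

lemma symm_Const_mult: "symm n p \<Longrightarrow> symm n (Const c * p)"
  by (simp add: symm_def lookup_Const_mult)

lemma map_key_eq0: assumes "\<sigma> permutes A" shows "Poly_Mapping.map_key \<sigma> (\<gamma>::nat \<Rightarrow>\<^sub>0 nat) = 0 \<longleftrightarrow> \<gamma> = 0"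
proof -
  have "Poly_Mapping.map_key \<sigma> (0::nat \<Rightarrow>\<^sub>0 nat) = 0"
    by (rule poly_mapping_eqI) (simp add: lookup_map_key_perm[OF assms])
  then show ?thesis using map_key_inj_perm[OF assms] by (metis injD)
qed

lemma symm_Const: "symm n (Const c)"
  unfolding symm_def
proof (intro allI impI)
  fix \<sigma> :: "nat \<Rightarrow> nat" and m :: "nat \<Rightarrow>\<^sub>0 nat" assume s: "\<sigma> permutes {..<n}"
  show "lk (Const c) (Poly_Mapping.map_key \<sigma> m) = lk (Const c) m"
    by (simp add: Const_def lookup_single map_key_eq0[OF s] eq_commute[of 0])
qed

lemma symm_zero: "symm n 0" by (simp add: symm_def)

lemma symm_mult: assumes p: "symm n p" and q: "symm n q" shows "symm n (p * q)"
  unfolding symm_def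
proof (intro allI impI)
  fix \<sigma> :: "nat \<Rightarrow> nat" and \<gamma> assume s: "\<sigma> permutes {..<n}"
  let ?f = "Poly_Mapping.map_key \<sigma> :: (nat \<Rightarrow>\<^sub>0 nat) \<Rightarrow> _"
  have injf: "inj ?f" by (rule map_key_inj_perm[OF s])
  have bij: "bij_betw ?f (ks r) (ks r)" if r: "symm n r" for r
  proof (rule bij_betw_imageI)
    show "inj_on ?f (ks r)" using inj_on_subset[OF injf subset_UNIV] .
    show "?f ` ks r = ks r"
    proof
      show "?f ` ks r \<subseteq> ks r" using r s by (auto simp: symm_def in_keys_iff)
      show "ks r \<subseteq> ?f ` ks r"
      proof
        fix a assume a: "a \<in> ks r"
        have "Poly_Mapping.map_key (inv \<sigma>) a \<in> ks r"
          using r permutes_inv[OF s] a by (auto simp: symm_def in_keys_iff)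
        then show "a \<in> ?f ` ks r" using map_key_inv_perm[OF s, of a] by (metis imageI)
      qed
    qed
  qed
  have "lk (p * q) (?f \<gamma>) = (\<Sum>\<alpha>\<in>ks p. \<Sum>\<beta>\<in>ks q. (lk p \<alpha> * lk q \<beta> when \<alpha> + \<beta> = ?f \<gamma>))"
    by (rule lookup_mult_expand)
  also have "\<dots> = (\<Sum>\<alpha>\<in>ks p. \<Sum>\<beta>\<in>ks q. (lk p (?f \<alpha>) * lk q (?f \<beta>) when ?f \<alpha> + ?f \<beta> = ?f \<gamma>))"
    apply (subst sum.reindex_bij_betw[OF bij[OF p], symmetric])
    apply (rule sum.cong[OF refl])
    apply (subst sum.reindex_bij_betw[OF bij[OF q], symmetric])
    apply simp
    done
  also have "\<dots> = (\<Sum>\<alpha>\<in>ks p. \<Sum>\<beta>\<in>ks q. (lk p \<alpha> * lk q \<beta> when \<alpha> + \<beta> = \<gamma>))"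
    using p q s by (simp add: symm_def map_key_add_perm[OF s, symmetric] inj_eq[OF injf])
  also have "\<dots> = lk (p * q) \<gamma>" by (rule lookup_mult_expand[symmetric])
  finally show "lk (p * q) (?f \<gamma>) = lk (p * q) \<gamma>" .
qed

lemma symm_one: "symm n 1" using symm_Const[of n 1] by simp

lemma symm_sum: "(\<And>i. i \<in> A \<Longrightarrow> symm n (f i)) \<Longrightarrow> symm n (\<Sum>i\<in>A. f i)"
  by (induction A rule: infinite_finite_induct) (simp_all add: symm_zero symm_add)

lemma symm_prod: "(\<And>i. i \<in> A \<Longrightarrow> symm n (f i)) \<Longrightarrow> symm n (\<Prod>i\<in>A. f i)"
  by (induction A rule: infinite_finite_induct) (simp_all add: symm_one symm_mult)

lemma symm_power: "symm n p \<Longrightarrow> symm n (p ^ k)"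
  by (induction k) (simp_all add: symm_one symm_mult)

lemma in_vars_add: "in_vars n p \<Longrightarrow> in_vars n q \<Longrightarrow> in_vars n (p + q)"
  unfolding in_vars_def using keys_add[of p q] by auto

lemma in_vars_uminus: "in_vars n p \<Longrightarrow> in_vars n (- p)"
  unfolding in_vars_def by simp

lemma in_vars_diff: "in_vars n p \<Longrightarrow> in_vars n q \<Longrightarrow> in_vars n (p - q)"
  using in_vars_add[of n p "- q"] in_vars_uminus[of n q] by simp

lemma in_vars_mult: assumes "in_vars n p" "in_vars n q" shows "in_vars n (p * q)"
  unfolding in_vars_def
proof
  fix \<gamma> assume "\<gamma> \<in> ks (p * q)"
  then obtain a b where g: "\<gamma> = a + b" and a: "a \<in> ks p" and b: "b \<in> ks q"
    using keys_mult[of p q] by auto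
  have "ks (a + b) \<subseteq> ks a \<union> ks b" by (rule keys_add)
  then show "ks \<gamma> \<subseteq> {..<n}" using assms a b g unfolding in_vars_def by auto
qed

lemma in_vars_Const: "in_vars n (Const c)" by (simp add: in_vars_def Const_def)

lemma in_vars_zero: "in_vars n 0" by (simp add: in_vars_def)
lemma in_vars_one: "in_vars n 1" by (simp add: in_vars_def)

lemma in_vars_sum: "(\<And>i. i \<in> A \<Longrightarrow> in_vars n (f i)) \<Longrightarrow> in_vars n (\<Sum>i\<in>A. f i)"
  by (induction A rule: infinite_finite_induct) (simp_all add: in_vars_zero in_vars_add)

lemma in_vars_prod: "(\<And>i. i \<in> A \<Longrightarrow> in_vars n (f i)) \<Longrightarrow> in_vars n (\<Prod>i\<in>A. f i)"
  by (induction A rule: infinite_finite_induct) (simp_all add: in_vars_one in_vars_mult)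

lemma in_vars_power: "in_vars n p \<Longrightarrow> in_vars n (p ^ k)"
  by (induction k) (simp_all add: in_vars_one in_vars_mult)

lemma in_vars_elem_sym: "in_vars n (elem_sym n k)"
  by (auto simp: in_vars_def in_keys_iff lookup_elem_sym2)

lemma in_vars_compl_sym: "in_vars n (compl_sym n k)"
  by (auto simp: in_vars_def in_keys_iff lookup_compl_sym)

lemma Rsym_add: "p \<in> Rsym n \<Longrightarrow> q \<in> Rsym n \<Longrightarrow> p + q \<in> Rsym n"
  by (simp add: Rsym_iff in_vars_add symm_add)
lemma Rsym_diff: "p \<in> Rsym n \<Longrightarrow> q \<in> Rsym n \<Longrightarrow> p - q \<in> Rsym n"
  by (simp add: Rsym_iff in_vars_diff symm_diff)
lemma Rsym_mult: "p \<in> Rsym n \<Longrightarrow> q \<in> Rsym n \<Longrightarrow> p * q \<in> Rsym n"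
  by (simp add: Rsym_iff in_vars_mult symm_mult)
lemma Rsym_Const: "Const c \<in> Rsym n"
  by (simp add: Rsym_iff in_vars_Const symm_Const)
lemma Rsym_zero: "0 \<in> Rsym n" using Rsym_Const[of 0 n] by simp
lemma Rsym_one: "1 \<in> Rsym n" using Rsym_Const[of 1 n] by simp
lemma Rsym_sum: "(\<And>i. i \<in> A \<Longrightarrow> f i \<in> Rsym n) \<Longrightarrow> (\<Sum>i\<in>A. f i) \<in> Rsym n"
  by (simp add: Rsym_iff in_vars_sum symm_sum)
lemma Rsym_prod: "(\<And>i. i \<in> A \<Longrightarrow> f i \<in> Rsym n) \<Longrightarrow> (\<Prod>i\<in>A. f i) \<in> Rsym n"
  by (simp add: Rsym_iff in_vars_prod symm_prod)
lemma Rsym_power: "p \<in> Rsym n \<Longrightarrow> p ^ k \<in> Rsym n"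
  by (simp add: Rsym_iff in_vars_power symm_power)
lemma Rsym_elem_sym: "elem_sym n k \<in> Rsym n"
  by (simp add: Rsym_iff in_vars_elem_sym symm_elem_sym)
lemma Rsym_compl_sym: "compl_sym n k \<in> Rsym n"
  by (simp add: Rsym_iff in_vars_compl_sym symm_compl_sym)

lemma less_pm_iff: "(x :: nat \<Rightarrow>\<^sub>0 nat) < y \<longleftrightarrow> (\<exists>k. lk x k < lk y k \<and> (\<forall>k'<k. lk x k' = lk y k'))"
  by (simp add: less_poly_mapping.rep_eq less_fun_def)

lemma sum_sum_when_pair: assumes "finite A" "finite B" "x \<in> A" "y \<in> B"
  shows "(\<Sum>a\<in>A. \<Sum>b\<in>B. ((f a b :: 'c::comm_monoid_add) when a = x \<and> b = y)) = f x y"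
proof -
  have "\<And>a. (\<Sum>b\<in>B. (f a b when a = x \<and> b = y)) = (if a = x then f a y else 0)"
    subgoal for a by (cases "a = x") (simp_all add: when_def sum.delta assms)
    done
  then show ?thesis by (simp add: sum.delta assms)
qed

definition lead :: "mpoly \<Rightarrow> (nat \<Rightarrow>\<^sub>0 nat) \<Rightarrow> complex \<Rightarrow> bool" where
  "lead p \<alpha> c \<longleftrightarrow> lk p \<alpha> = c \<and> c \<noteq> 0 \<and> (\<forall>\<gamma>\<in>ks p. \<gamma> \<le> \<alpha>)"

lemma lead_mult: assumes p: "lead p \<alpha> c" and q: "lead q \<beta> d"
  shows "lead (p * q) (\<alpha> + \<beta>) (c * d)"
proof -
  have ap: "\<alpha> \<in> ks p" and bq: "\<beta> \<in> ks q" using p q by (auto simp: lead_def in_keys_iff)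
  have key: "a = \<alpha> \<and> b = \<beta>" if a: "a \<in> ks p" and b: "b \<in> ks q" and e: "a + b = \<alpha> + \<beta>" for a b
  proof -
    have a1: "a \<le> \<alpha>" and b1: "b \<le> \<beta>" using a b p q by (auto simp: lead_def)
    have "a = \<alpha>"
    proof (rule ccontr)
      assume "a \<noteq> \<alpha>" then have "a < \<alpha>" using a1 by simp
      then have "a + b < \<alpha> + b" by (rule add_strict_right_mono)
      also have "\<alpha> + b \<le> \<alpha> + \<beta>" using b1 by (rule add_left_mono)
      finally show False using e by simp
    qed
    then show ?thesis using e by simp
  qed
  have "lk (p * q) (\<alpha> + \<beta>) = (\<Sum>a\<in>ks p. \<Sum>b\<in>ks q. (lk p a * lk q b when a + b = \<alpha> + \<beta>))"
    by (rule lookup_mult_expand)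
  also have "\<dots> = (\<Sum>a\<in>ks p. \<Sum>b\<in>ks q. (lk p a * lk q b when a = \<alpha> \<and> b = \<beta>))"
    by (intro sum.cong refl when_cong) (use key in auto)
  also have "\<dots> = lk p \<alpha> * lk q \<beta>"
    using ap bq by (intro sum_sum_when_pair) auto
  finally have 1: "lk (p * q) (\<alpha> + \<beta>) = c * d" using p q by (simp add: lead_def)
  have 2: "\<gamma> \<le> \<alpha> + \<beta>" if g: "\<gamma> \<in> ks (p * q)" for \<gamma>
  proof -
    obtain a b where "\<gamma> = a + b" "a \<in> ks p" "b \<in> ks q" using keys_mult[of p q] g by auto
    then show ?thesis using p q by (auto simp: lead_def intro: add_mono)
  qed
  show ?thesis using 1 2 p q by (simp add: lead_def)
qed

lemma lead_one: "lead 1 0 1" by (simp add: lead_def)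

lemma lead_power: "lead p \<alpha> c \<Longrightarrow> lead (p ^ j) (\<Sum>t<j. \<alpha>) (c ^ j)"
proof (induction j)
  case 0 then show ?case by (simp add: lead_one)
next
  case (Suc j)
  have l: "lead (p * p ^ j) (\<alpha> + (\<Sum>t<j. \<alpha>)) (c * c ^ j)" by (rule lead_mult[OF Suc.prems Suc.IH[OF Suc.prems]])
  have e: "(\<Sum>t<Suc j. \<alpha>) = \<alpha> + (\<Sum>t<j. \<alpha>)" by (simp only: sum.lessThan_Suc add.commute)
  show ?case using l by (simp only: e power_Suc)
qed

lemma lead_prod: "finite A \<Longrightarrow> (\<And>i. i \<in> A \<Longrightarrow> lead (f i) (a i) (c i)) \<Longrightarrow>
   lead (\<Prod>i\<in>A. f i) (\<Sum>i\<in>A. a i) (\<Prod>i\<in>A. c i)"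
proof (induction A rule: finite_induct)
  case empty then show ?case by (simp add: lead_one)
next
  case (insert x F)
  then show ?case by (simp add: lead_mult)
qed

lemma ind_le_prefix: assumes "S \<subseteq> {..<n}" "card S = k"
  shows "ind S \<le> ind {..<k}"
proof (cases "{..<k} \<subseteq> S")
  case True
  have "finite S" using assms(1) finite_subset by blast
  then have "{..<k} = S" using True assms(2) by (intro card_subset_eq) auto
  then show ?thesis by simp
next
  case False
  have fS: "finite S" using assms(1) finite_subset by blast
  define i where "i = Min ({..<k} - S)"
  have ne: "{..<k} - S \<noteq> {}" using False by blast
  have i: "i \<in> {..<k} - S" unfolding i_def by (rule Min_in) (use ne in auto)
  have min: "\<And>j. j \<in> {..<k} - S \<Longrightarrow> i \<le> j" unfolding i_def by (rule Min_le) auto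
  have "ind S < ind {..<k}" unfolding less_pm_iff
  proof (intro exI conjI allI impI)
    show "lk (ind S) i < lk (ind {..<k}) i" using i fS by (simp add: lookup_ind)
  next
    fix j assume "j < i"
    then have "j < k" "j \<in> S" using i min[of j] by force+
    then show "lk (ind S) j = lk (ind {..<k}) j" using fS by (simp add: lookup_ind)
  qed
  then show ?thesis by simp
qed

lemma lead_elem_sym: assumes "k \<le> n" shows "lead (elem_sym n k) (ind {..<k}) 1"
proof -
  have "lk (elem_sym n k) (ind {..<k}) = 1"
    unfolding lookup_elem_sym2 using assms by (simp add: keys_ind mdeg_ind lookup_ind)
  moreover have "\<gamma> \<le> ind {..<k}" if "\<gamma> \<in> ks (elem_sym n k)" for \<gamma>
  proof -
    have h: "ks \<gamma> \<subseteq> {..<n}" "mdeg \<gamma> = k" "\<forall>i. lk \<gamma> i \<le> 1"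
      using that by (auto simp: in_keys_iff lookup_elem_sym2 when_def split: if_splits)
    then have "is01 \<gamma>" by (simp add: is01_iff)
    then have "ind (ks \<gamma>) = \<gamma>" by (simp add: ind_eq_iff is01_def)
    then have g: "\<gamma> = ind (ks \<gamma>)" by simp
    have "card (ks \<gamma>) = k" using h \<open>is01 \<gamma>\<close> card_keys_01 by simp
    then have "ind (ks \<gamma>) \<le> ind {..<k}" using h by (intro ind_le_prefix) auto
    then show ?thesis using g by simp
  qed
  ultimately show ?thesis by (simp add: lead_def)
qed

lemma lead_sorted: assumes p: "symm n p" and l: "lead p \<alpha> c" and i: "Suc i < n"
  shows "lk \<alpha> (Suc i) \<le> lk \<alpha> i"
proof (rule ccontr)
  assume "\<not> ?thesis"
  then have lt: "lk \<alpha> i < lk \<alpha> (Suc i)" by simp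
  define \<sigma> where "\<sigma> = Transposition.transpose i (Suc i)"
  have s: "\<sigma> permutes {..<n}" unfolding \<sigma>_def by (rule permutes_swap_id) (use i in auto)
  define \<beta> where "\<beta> = Poly_Mapping.map_key \<sigma> \<alpha>"
  have "lk p \<beta> = lk p \<alpha>" using p s by (simp add: symm_def \<beta>_def)
  then have "\<beta> \<in> ks p" using l by (simp add: lead_def in_keys_iff)
  then have le: "\<beta> \<le> \<alpha>" using l by (simp add: lead_def)
  have lb: "\<And>j. lk \<beta> j = lk \<alpha> (\<sigma> j)" unfolding \<beta>_def by (rule lookup_map_key_perm[OF s])
  have "\<alpha> < \<beta>" unfolding less_pm_iff
  proof (intro exI conjI allI impI)
    show "lk \<alpha> i < lk \<beta> i" using lt unfolding lb \<sigma>_def by simp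
  next
    fix j assume "j < i" then show "lk \<alpha> j = lk \<beta> j"
      unfolding lb \<sigma>_def by simp
  qed
  then show False using le by simp
qed

definition homog :: "nat \<Rightarrow> mpoly \<Rightarrow> bool" where
  "homog D p \<longleftrightarrow> (\<forall>\<gamma>\<in>ks p. mdeg \<gamma> = D)"

definition degle :: "nat \<Rightarrow> mpoly \<Rightarrow> bool" where
  "degle D p \<longleftrightarrow> (\<forall>\<gamma>\<in>ks p. mdeg \<gamma> \<le> D)"

lemma keys_mult_obtain: assumes "\<gamma> \<in> ks ((p::mpoly) * q)"
  obtains a b where "\<gamma> = a + b" "a \<in> ks p" "b \<in> ks q"
  using keys_mult[of p q] assms by auto

lemma homog_mult: "homog a p \<Longrightarrow> homog b q \<Longrightarrow> homog (a + b) (p * q)"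
  unfolding homog_def by (metis keys_mult_obtain mdeg_add)

lemma degle_mult: "degle a p \<Longrightarrow> degle b q \<Longrightarrow> degle (a + b) (p * q)"
  unfolding degle_def by (metis keys_mult_obtain mdeg_add add_mono)

lemma homog_add: assumes "homog D p" "homog D q" shows "homog D (p + q)"
  unfolding homog_def
proof
  fix \<gamma> assume "\<gamma> \<in> ks (p + q)"
  then have "\<gamma> \<in> ks p \<or> \<gamma> \<in> ks q" using keys_add[of p q] by auto
  then show "mdeg \<gamma> = D" using assms by (auto simp: homog_def)
qed

lemma degle_add: assumes "degle D p" "degle D q" shows "degle D (p + q)"
  unfolding degle_def
proof
  fix \<gamma> assume "\<gamma> \<in> ks (p + q)"
  then have "\<gamma> \<in> ks p \<or> \<gamma> \<in> ks q" using keys_add[of p q] by auto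
  then show "mdeg \<gamma> \<le> D" using assms by (auto simp: degle_def)
qed

lemma homog_Const_mult: "homog D p \<Longrightarrow> homog D (Const c * p)"
  unfolding homog_def using keys_Const_mult by blast

lemma degle_Const_mult: "degle D p \<Longrightarrow> degle D (Const c * p)"
  unfolding degle_def using keys_Const_mult by blast

lemma degle_uminus: "degle D p \<Longrightarrow> degle D (- p)"
  unfolding degle_def by simp

lemma degle_diff: "degle D p \<Longrightarrow> degle D q \<Longrightarrow> degle D (p - q)"
  using degle_add[of D p "- q"] degle_uminus[of D q] by simp

lemma degle_mono: "degle D p \<Longrightarrow> D \<le> D' \<Longrightarrow> degle D' p"
  unfolding degle_def by force

lemma homog_degle: "homog D p \<Longrightarrow> degle D p"
  unfolding homog_def degle_def by simp

lemma homog_one: "homog 0 1" by (simp add: homog_def)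

lemma homog_power: "homog a p \<Longrightarrow> homog (j * a) (p ^ j)"
  by (induction j) (simp_all add: homog_one homog_mult)

lemma homog_prod: "finite A \<Longrightarrow> (\<And>i. i \<in> A \<Longrightarrow> homog (a i) (f i)) \<Longrightarrow> homog (\<Sum>i\<in>A. a i) (\<Prod>i\<in>A. f i)"
  by (induction A rule: finite_induct) (simp_all add: homog_one homog_mult)

lemma homog_elem_sym: "homog k (elem_sym n k)"
  by (auto simp: homog_def in_keys_iff lookup_elem_sym2 when_def split: if_splits)

lemma homog_compl_sym: "homog k (compl_sym n k)"
  by (auto simp: homog_def in_keys_iff lookup_compl_sym when_def split: if_splits)

definition eprodc :: "nat \<Rightarrow> (nat \<Rightarrow> nat) \<Rightarrow> mpoly" where
  "eprodc n c = (\<Prod>k\<in>{1..n}. elem_sym n k ^ c k)"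

lemma Rsym_eprodc: "eprodc n c \<in> Rsym n"
  unfolding eprodc_def by (intro Rsym_prod Rsym_power Rsym_elem_sym)

lemma homog_eprodc: "homog (\<Sum>k\<in>{1..n}. c k * k) (eprodc n c)"
  unfolding eprodc_def by (intro homog_prod homog_power homog_elem_sym) simp

lemma lead_eprodc: "lead (eprodc n c) (\<Sum>k\<in>{1..n}. \<Sum>t<c k. ind {..<k}) 1"
proof -
  have "lead (eprodc n c) (\<Sum>k\<in>{1..n}. \<Sum>t<c k. ind {..<k}) (\<Prod>k\<in>{1..n}. 1 ^ c k)"
    unfolding eprodc_def by (intro lead_prod lead_power lead_elem_sym) auto
  then show ?thesis by simp
qed

lemma eprodc_split: assumes "k \<in> {1..n}" "c k \<ge> 1"
  shows "eprodc n c = elem_sym n k * eprodc n (c(k := c k - 1))"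
proof -
  have "eprodc n c = elem_sym n k ^ c k * (\<Prod>k'\<in>{1..n} - {k}. elem_sym n k' ^ c k')"
    unfolding eprodc_def using assms(1) by (simp add: prod.remove)
  moreover have "eprodc n (c(k := c k - 1)) = elem_sym n k ^ (c k - 1) * (\<Prod>k'\<in>{1..n} - {k}. elem_sym n k' ^ c k')"
    unfolding eprodc_def using assms(1) by (simp add: prod.remove)
  moreover have "elem_sym n k ^ c k = elem_sym n k * elem_sym n k ^ (c k - 1)"
    using assms(2) by (metis Suc_diff_le diff_Suc_1 power_Suc)
  ultimately show ?thesis by (simp add: mult.assoc)
qed

lemma telescope: assumes "\<And>k. f (Suc k) \<le> (f k :: nat)" "i \<le> N"
  shows "(\<Sum>k\<in>{Suc i..N}. f (k - 1) - f k) = f i - f N"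
  using assms(2)
proof (induction N)
  case 0 then show ?case by simp
next
  case (Suc N)
  have anti: "f b \<le> f a" if "a \<le> b" for a b
    using that by (induction b) (auto intro: order_trans[OF assms(1)] simp: le_Suc_eq)
  show ?case
  proof (cases "i = Suc N")
    case True then show ?thesis by simp
  next
    case False
    then have iN: "i \<le> N" using Suc.prems by simp
    have "(\<Sum>k\<in>{Suc i..Suc N}. f (k - 1) - f k) = (\<Sum>k\<in>{Suc i..N}. f (k - 1) - f k) + (f N - f (Suc N))"
      using iN by (simp add: sum.cl_ivl_Suc)
    also have "\<dots> = f i - f N + (f N - f (Suc N))" using Suc.IH[OF iN] by simp
    also have "\<dots> = f i - f (Suc N)" using anti[OF iN] assms(1)[of N] by simp
    finally show ?thesis .
  qed
qed

definition cexp :: "(nat \<Rightarrow>\<^sub>0 nat) \<Rightarrow> nat \<Rightarrow> nat" where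
  "cexp \<alpha> k = lk \<alpha> (k - 1) - lk \<alpha> k"

lemma cexp_exponent: assumes "ks \<alpha> \<subseteq> {..<n}" "\<And>k. lk \<alpha> (Suc k) \<le> lk \<alpha> k"
  shows "(\<Sum>k\<in>{1..n}. \<Sum>t<cexp \<alpha> k. ind {..<k}) = \<alpha>"
proof (rule poly_mapping_eqI)
  fix i
  have "lk (\<Sum>k\<in>{1..n}. \<Sum>t<cexp \<alpha> k. ind {..<k}) i = (\<Sum>k\<in>{1..n}. (if i < k then cexp \<alpha> k else 0))"
    by (simp only: lookup_sum) (simp add: lookup_ind if_distrib[of "\<lambda>x. _ * x"] cong: if_cong)
  also have "\<dots> = lk \<alpha> i"
  proof (cases "i < n")
    case True
    have "(\<Sum>k\<in>{1..n}. (if i < k then cexp \<alpha> k else 0)) = (\<Sum>k\<in>{Suc i..n}. cexp \<alpha> k)"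
      by (rule sum.mono_neutral_cong_right) auto
    also have "\<dots> = lk \<alpha> i - lk \<alpha> n" unfolding cexp_def
      by (rule telescope) (use assms(2) True in auto)
    also have "lk \<alpha> n = 0" using assms(1) by (auto simp: in_keys_iff)
    finally show ?thesis by simp
  next
    case False
    then have "lk \<alpha> i = 0" using assms(1) by (auto simp: in_keys_iff)
    moreover have "(\<Sum>k\<in>{1..n}. (if i < k then cexp \<alpha> k else 0)) = 0"
      using False by (intro sum.neutral) auto
    ultimately show ?thesis by simp
  qed
  finally show "lk (\<Sum>k\<in>{1..n}. \<Sum>t<cexp \<alpha> k. ind {..<k}) i = lk \<alpha> i" .
qed

lemma ms_zero: "0 \<in> module_span A G"
  unfolding module_span_def by (rule CollectI, rule exI[of _ "{}"]) auto

lemma ms_gen: "a \<in> A \<Longrightarrow> g \<in> G \<Longrightarrow> a * g \<in> module_span A G"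
  unfolding module_span_def
  by (rule CollectI, rule exI[of _ "{0}"], rule exI[of _ "\<lambda>_. a"], rule exI[of _ "\<lambda>_. g"]) auto

lemma ms_add: assumes "x \<in> module_span A G" "y \<in> module_span A G"
  shows "x + y \<in> module_span A G"
proof -
  have "\<exists>F r g. x = (\<Sum>i\<in>F. r i * g i) \<and> finite (F::nat set) \<and> (\<forall>i\<in>F. r i \<in> A \<and> g i \<in> G)"
    using assms(1) by (simp add: module_span_def)
  then obtain F1 r1 g1 where x: "x = (\<Sum>i\<in>F1. r1 i * g1 i)" "finite (F1::nat set)" "\<forall>i\<in>F1. r1 i \<in> A \<and> g1 i \<in> G"
    by blast
  have "\<exists>F r g. y = (\<Sum>i\<in>F. r i * g i) \<and> finite (F::nat set) \<and> (\<forall>i\<in>F. r i \<in> A \<and> g i \<in> G)"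
    using assms(2) by (simp add: module_span_def)
  then obtain F2 r2 g2 where y: "y = (\<Sum>i\<in>F2. r2 i * g2 i)" "finite (F2::nat set)" "\<forall>i\<in>F2. r2 i \<in> A \<and> g2 i \<in> G"
    by blast
  define F where "F = (\<lambda>i. 2*i) ` F1 \<union> (\<lambda>i. 2*i+1) ` F2"
  define r where "r i = (if even i then r1 (i div 2) else r2 (i div 2))" for i :: nat
  define g where "g i = (if even i then g1 (i div 2) else g2 (i div 2))" for i :: nat
  have inj1: "inj_on (\<lambda>i::nat. 2*i) F1" by (auto simp: inj_on_def)
  have inj2: "inj_on (\<lambda>i::nat. 2*i+1) F2" by (auto simp: inj_on_def)
  have disj: "(\<lambda>i::nat. 2*i) ` F1 \<inter> (\<lambda>i. 2*i+1) ` F2 = {}" by auto presburger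
  have "(\<Sum>i\<in>F. r i * g i) = (\<Sum>i\<in>(\<lambda>i. 2*i) ` F1. r i * g i) + (\<Sum>i\<in>(\<lambda>i. 2*i+1) ` F2. r i * g i)"
    unfolding F_def using x(2) y(2) disj by (intro sum.union_disjoint) auto
  also have "\<dots> = x + y"
  proof -
    have a: "(\<Sum>i\<in>(\<lambda>i. 2*i) ` F1. r i * g i) = (\<Sum>i\<in>F1. r (2*i) * g (2*i))"
      using sum.reindex[OF inj1, of "\<lambda>i. r i * g i"] by (simp add: comp_def)
    have b: "(\<Sum>i\<in>(\<lambda>i. 2*i+1) ` F2. r i * g i) = (\<Sum>i\<in>F2. r (2*i+1) * g (2*i+1))"
      using sum.reindex[OF inj2, of "\<lambda>i. r i * g i"] by (simp only: comp_def)
    show ?thesis unfolding a b x(1) y(1) by (simp add: r_def g_def)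
  qed
  finally have e: "x + y = (\<Sum>i\<in>F. r i * g i)" by simp
  have "finite F" using x(2) y(2) by (simp add: F_def)
  moreover have "\<forall>i\<in>F. r i \<in> A \<and> g i \<in> G" using x(3) y(3) by (auto simp: F_def r_def g_def)
  ultimately show ?thesis unfolding module_span_def using e by blast
qed

lemma ms_smul: assumes "s \<in> A" "\<And>a. a \<in> A \<Longrightarrow> s * a \<in> A" "x \<in> module_span A G"
  shows "s * x \<in> module_span A G"
proof -
  have "\<exists>F r g. x = (\<Sum>i\<in>F. r i * g i) \<and> finite (F::nat set) \<and> (\<forall>i\<in>F. r i \<in> A \<and> g i \<in> G)"
    using assms(3) by (simp add: module_span_def)
  then obtain F r g where x: "x = (\<Sum>i\<in>F. r i * g i)" "finite (F::nat set)" "\<forall>i\<in>F. r i \<in> A \<and> g i \<in> G"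
    by blast
  have "s * x = (\<Sum>i\<in>F. (s * r i) * g i)" using x(1) by (simp add: sum_distrib_left mult.assoc)
  moreover have "\<forall>i\<in>F. s * r i \<in> A \<and> g i \<in> G" using x(3) assms(2) by auto
  ultimately show ?thesis unfolding module_span_def mem_Collect_eq using x(2)
    by (intro exI[of _ F] exI[of _ "\<lambda>i. s * r i"] exI[of _ g]) simp
qed

lemma Rodd_Const: "Const c \<in> Rodd n" unfolding Rodd_def by (rule subalg.const)
lemma Rodd_mult: "a \<in> Rodd n \<Longrightarrow> b \<in> Rodd n \<Longrightarrow> a * b \<in> Rodd n" unfolding Rodd_def by (rule subalg.mult)
lemma Rodd_add: "a \<in> Rodd n \<Longrightarrow> b \<in> Rodd n \<Longrightarrow> a + b \<in> Rodd n" unfolding Rodd_def by (rule subalg.add)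
lemma Rodd_elem: "odd k \<Longrightarrow> k \<le> n \<Longrightarrow> elem_sym n k \<in> Rodd n"
  unfolding Rodd_def by (rule subalg.gen) (auto elim!: oddE)

lemma Rodd_Rsym: "a \<in> Rodd n \<Longrightarrow> a \<in> Rsym n"
  unfolding Rodd_def
  by (induction rule: subalg.induct) (auto intro: Rsym_Const Rsym_add Rsym_mult Rsym_elem_sym)

definition ple :: "(nat \<Rightarrow>\<^sub>0 nat) \<Rightarrow> (nat \<Rightarrow>\<^sub>0 nat) \<Rightarrow> bool" where
  "ple a b \<longleftrightarrow> (\<forall>i. lk a i \<le> lk b i)"

lemma lookup_minus_nat: "lk ((a::nat \<Rightarrow>\<^sub>0 nat) - b) i = lk a i - lk b i"
  by (simp add: lookup_minus)

lemma sum_eq_ple: "(a::nat \<Rightarrow>\<^sub>0 nat) + \<mu> = \<gamma> \<longleftrightarrow> ple a \<gamma> \<and> \<mu> = \<gamma> - a"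
proof
  assume h: "a + \<mu> = \<gamma>"
  have "ple a \<gamma>" using h by (auto simp: ple_def lookup_add)
  moreover have "\<mu> = \<gamma> - a" using h by (intro poly_mapping_eqI) (auto simp: lookup_add lookup_minus_nat)
  ultimately show "ple a \<gamma> \<and> \<mu> = \<gamma> - a" by simp
next
  assume h: "ple a \<gamma> \<and> \<mu> = \<gamma> - a"
  show "a + \<mu> = \<gamma>" using h by (intro poly_mapping_eqI) (auto simp: lookup_add lookup_minus_nat ple_def)
qed

lemma elem_sym_big: "n < k \<Longrightarrow> elem_sym n k = 0"
proof -
  assume "n < k"
  have "esets n k = {}"
  proof (rule ccontr)
    assume "esets n k \<noteq> {}"
    then obtain S where "S \<subseteq> {..<n}" "card S = k" by (auto simp: esets_def)
    then have "k \<le> n" using card_mono[of "{..<n}" S] by simp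
    then show False using \<open>n < k\<close> by simp
  qed
  then show ?thesis by (simp add: elem_sym_eq)
qed

lemma elem_sym_0: "elem_sym n 0 = 1"
proof -
  have "S = {}" if "S \<subseteq> {..<n}" "card S = 0" for S
    using that card_0_eq[of S] finite_subset[of S "{..<n}"] by auto
  then have "esets n 0 = {{}}" by (auto simp: esets_def)
  then show ?thesis by (simp add: elem_sym_eq ind_def)
qed

lemma compl_sym_expand: "compl_sym n k = (\<Sum>\<mu>\<in>hmons n k. sg \<mu> 1)"
  by (simp add: compl_sym_def hmons_def)

lemma lookup_eh: assumes "k \<le> N"
  shows "lk (elem_sym n k * compl_sym n (N - k)) \<gamma> =
     (of_nat (card (ks \<gamma>) choose k) when ks \<gamma> \<subseteq> {..<n} \<and> mdeg \<gamma> = N)"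
proof -
  have "elem_sym n k * compl_sym n (N - k) = (\<Sum>S\<in>esets n k. \<Sum>\<mu>\<in>hmons n (N - k). sg (ind S + \<mu>) 1)"
    by (simp add: elem_sym_eq compl_sym_expand sum_product mult_single)
  then have "lk (elem_sym n k * compl_sym n (N - k)) \<gamma> =
      (\<Sum>S\<in>esets n k. \<Sum>\<mu>\<in>hmons n (N - k). (1 when ind S + \<mu> = \<gamma>))"
    by (simp add: lookup_sum lookup_single)
  also have "\<dots> = (\<Sum>S\<in>esets n k. (1 when ple (ind S) \<gamma> \<and> \<gamma> - ind S \<in> hmons n (N - k)))"
  proof (rule sum.cong[OF refl])
    fix S
    have "(\<Sum>\<mu>\<in>hmons n (N - k). (1 when ind S + \<mu> = \<gamma>)) =
          (\<Sum>\<mu>\<in>hmons n (N - k). (if \<mu> = \<gamma> - ind S then (1 when ple (ind S) \<gamma>) else 0))"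
      by (rule sum.cong[OF refl]) (auto simp: sum_eq_ple when_def)
    also have "\<dots> = (1 when ple (ind S) \<gamma> \<and> \<gamma> - ind S \<in> hmons n (N - k))"
      using finite_hmons by (simp add: sum.delta when_def)
    finally show "(\<Sum>\<mu>\<in>hmons n (N - k). (1 when ind S + \<mu> = \<gamma>)) =
          (1 when ple (ind S) \<gamma> \<and> \<gamma> - ind S \<in> hmons n (N - k))" .
  qed
  also have "\<dots> = (of_nat (card (ks \<gamma>) choose k) when ks \<gamma> \<subseteq> {..<n} \<and> mdeg \<gamma> = N)"
  proof (cases "ks \<gamma> \<subseteq> {..<n} \<and> mdeg \<gamma> = N")
    case True
    have iff: "S \<in> esets n k \<and> ple (ind S) \<gamma> \<and> \<gamma> - ind S \<in> hmons n (N - k) \<longleftrightarrow> S \<subseteq> ks \<gamma> \<and> card S = k"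
      for S
    proof
      assume h: "S \<in> esets n k \<and> ple (ind S) \<gamma> \<and> \<gamma> - ind S \<in> hmons n (N - k)"
      then have fS: "finite S" by (auto simp: esets_def intro: finite_subset)
      have "S \<subseteq> ks \<gamma>"
      proof
        fix i assume "i \<in> S" then have "lk (ind S) i = 1" using fS by (simp add: lookup_ind)
        moreover have "lk (ind S) i \<le> lk \<gamma> i" using h by (simp add: ple_def)
        ultimately show "i \<in> ks \<gamma>" by (simp add: in_keys_iff)
      qed
      moreover have hS: "S \<in> esets n k" using h by (rule conjunct1)
      have "card S = k" using hS by (simp add: esets_def)
      ultimately show "S \<subseteq> ks \<gamma> \<and> card S = k" by (rule conjI)
    next
      assume h: "S \<subseteq> ks \<gamma> \<and> card S = k"
      have fS: "finite S" by (rule finite_subset[OF conjunct1[OF h]]) simp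
      have pl: "ple (ind S) \<gamma>" unfolding ple_def
      proof
        fix i show "lk (ind S) i \<le> lk \<gamma> i" using h fS by (auto simp: lookup_ind in_keys_iff)
      qed
      have "ind S + (\<gamma> - ind S) = \<gamma>" using sum_eq_ple pl by blast
      then have "mdeg (ind S) + mdeg (\<gamma> - ind S) = N" using True by (metis mdeg_add)
      then have md: "mdeg (\<gamma> - ind S) = N - k" using h fS by (simp add: mdeg_ind)
      have "ks (\<gamma> - ind S) \<subseteq> ks \<gamma>" by (auto simp: in_keys_iff lookup_minus_nat)
      then show "S \<in> esets n k \<and> ple (ind S) \<gamma> \<and> \<gamma> - ind S \<in> hmons n (N - k)"
        using True h pl md by (auto simp: esets_def hmons_alt)
    qed
    have "(\<Sum>S\<in>esets n k. (1 when ple (ind S) \<gamma> \<and> \<gamma> - ind S \<in> hmons n (N - k))) =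
        (\<Sum>S\<in>esets n k. (if S \<in> {S. S \<subseteq> ks \<gamma> \<and> card S = k} then 1 else 0))"
      using iff by (intro sum.cong refl) (auto simp: when_def)
    also have "\<dots> = of_nat (card (esets n k \<inter> {S. S \<subseteq> ks \<gamma> \<and> card S = k}))"
      using finite_esets by (simp add: sum.If_cases)
    also have "esets n k \<inter> {S. S \<subseteq> ks \<gamma> \<and> card S = k} = {S. S \<subseteq> ks \<gamma> \<and> card S = k}"
      using True by (auto simp: esets_def)
    also have "card {S. S \<subseteq> ks \<gamma> \<and> card S = k} = card (ks \<gamma>) choose k"
      by (rule n_subsets) simp
    finally show ?thesis using True by simp
  next
    case False
    have "(1 when ple (ind S) \<gamma> \<and> \<gamma> - ind S \<in> hmons n (N - k)) = (0::complex)" if S: "S \<in> esets n k" for S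
    proof -
      have fS: "finite S" using S by (auto simp: esets_def intro: finite_subset)
      have "\<not> (ple (ind S) \<gamma> \<and> \<gamma> - ind S \<in> hmons n (N - k))"
      proof
        assume h: "ple (ind S) \<gamma> \<and> \<gamma> - ind S \<in> hmons n (N - k)"
        then have e: "ind S + (\<gamma> - ind S) = \<gamma>" using sum_eq_ple by blast
        have "ks (ind S) \<subseteq> {..<n}" using S fS by (simp add: keys_ind esets_def)
        moreover have "ks (\<gamma> - ind S) \<subseteq> {..<n}" using h by (simp add: hmons_alt)
        ultimately have "ks \<gamma> \<subseteq> {..<n}" using keys_add[of "ind S" "\<gamma> - ind S"] e by auto
        moreover have "mdeg \<gamma> = N" using e h S fS assms
          by (metis (mono_tags, lifting) mdeg_add mdeg_ind hmons_alt mem_Collect_eq esets_def le_add_diff_inverse)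
        ultimately show False using False by simp
      qed
      then show ?thesis by simp
    qed
    then show ?thesis using False by (simp add: sum.neutral)
  qed
  finally show ?thesis .
qed

lemma card_keys_le_mdeg: "card (ks \<gamma>) \<le> mdeg \<gamma>"
proof -
  have "card (ks \<gamma>) = (\<Sum>i\<in>ks \<gamma>. 1)" by simp
  also have "\<dots> \<le> (\<Sum>i\<in>ks \<gamma>. lk \<gamma> i)" by (intro sum_mono) (simp add: in_keys_iff)
  finally show ?thesis by (simp add: mdeg_def)
qed

lemma fund_identity: assumes "N \<ge> 1"
  shows "(\<Sum>k\<le>N. Const ((-1)^k) * (elem_sym n k * compl_sym n (N - k))) = 0"
proof (rule poly_mapping_eqI)
  fix \<gamma>
  have "lk (\<Sum>k\<le>N. Const ((-1)^k) * (elem_sym n k * compl_sym n (N - k))) \<gamma> =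
      (\<Sum>k\<le>N. (-1)^k * (of_nat (card (ks \<gamma>) choose k) when ks \<gamma> \<subseteq> {..<n} \<and> mdeg \<gamma> = N))"
    by (simp add: lookup_sum lookup_Const_mult lookup_eh)
  also have "\<dots> = 0"
  proof (cases "ks \<gamma> \<subseteq> {..<n} \<and> mdeg \<gamma> = N")
    case True
    define c where "c = card (ks \<gamma>)"
    have cN: "c \<le> N" using True card_keys_le_mdeg[of \<gamma>] by (simp add: c_def)
    have "\<gamma> \<noteq> 0" using True assms by auto
    then have "ks \<gamma> \<noteq> {}" by simp
    then have c0: "c > 0" by (simp add: c_def card_gt_0_iff)
    have "(\<Sum>k\<le>N. (-1)^k * (of_nat (c choose k) :: complex)) = (\<Sum>k\<le>c. (-1)^k * of_nat (c choose k))"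
      using cN by (intro sum.mono_neutral_right) auto
    also have "\<dots> = 0" using choose_alternating_sum[OF c0] by simp
    finally show ?thesis using True by (simp add: c_def)
  next
    case False then show ?thesis by simp
  qed
  finally show "lk (\<Sum>k\<le>N. Const ((-1)^k) * (elem_sym n k * compl_sym n (N - k))) \<gamma> = lk 0 \<gamma>" by simp
qed

inductive_set Iid :: "nat \<Rightarrow> mpoly set" for n where
  Iz: "0 \<in> Iid n"
| Io: "odd k \<Longrightarrow> k \<le> n \<Longrightarrow> r \<in> Rsym n \<Longrightarrow> elem_sym n k * r \<in> Iid n"
| Ia: "x \<in> Iid n \<Longrightarrow> y \<in> Iid n \<Longrightarrow> x + y \<in> Iid n"

lemma Iid_mult_right: "x \<in> Iid n \<Longrightarrow> s \<in> Rsym n \<Longrightarrow> x * s \<in> Iid n"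
proof (induction rule: Iid.induct)
  case Iz then show ?case by (simp add: Iid.Iz)
next
  case (Io k r) then show ?case using Iid.Io[of k n "r * s"] by (simp add: Rsym_mult mult.assoc)
next
  case (Ia x y) then show ?case by (simp add: distrib_right Iid.Ia)
qed

lemma Iid_mult_left: "x \<in> Iid n \<Longrightarrow> s \<in> Rsym n \<Longrightarrow> s * x \<in> Iid n"
  using Iid_mult_right[of x n s] by (simp add: mult.commute)

lemma Iid_Const: "x \<in> Iid n \<Longrightarrow> Const c * x \<in> Iid n"
  using Iid_mult_left Rsym_Const by blast

lemma Iid_e_odd: assumes "odd k" "r \<in> Rsym n" shows "elem_sym n k * r \<in> Iid n"
proof (cases "k \<le> n")
  case True then show ?thesis using assms by (rule_tac Iid.Io) auto
next
  case False then show ?thesis by (simp add: elem_sym_big Iid.Iz)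
qed

lemma Iid_sum: "(\<And>i. i \<in> A \<Longrightarrow> f i \<in> Iid n) \<Longrightarrow> (\<Sum>i\<in>A. f i) \<in> Iid n"
  by (induction A rule: infinite_finite_induct) (simp_all add: Iid.Iz Iid.Ia)

lemma Iid_uminus: "x \<in> Iid n \<Longrightarrow> - x \<in> Iid n"
  using Iid_Const[of x n "-1"] by (simp add: Const_minus)

lemma Iid_Rsym: "x \<in> Iid n \<Longrightarrow> x \<in> Rsym n"
  by (induction rule: Iid.induct) (auto intro: Rsym_zero Rsym_mult Rsym_elem_sym Rsym_add)

lemma compl_sym_odd_Iid: "odd N \<Longrightarrow> compl_sym n N \<in> Iid n"
proof (induction N rule: less_induct)
  case (less N)
  define g where "g k = Const ((-1)^k) * (elem_sym n k * compl_sym n (N - k))" for k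
  have N1: "N \<ge> 1" using less.prems by (cases N) auto
  have "0 = (\<Sum>k\<le>N. g k)" using fund_identity[OF N1] by (simp add: g_def)
  also have "\<dots> = g 0 + (\<Sum>i<N. g (Suc i))" by (rule sum.atMost_shift)
  also have "g 0 = compl_sym n N" by (simp add: g_def elem_sym_0)
  finally have e: "compl_sym n N = - (\<Sum>i<N. g (Suc i))" by (simp add: eq_neg_iff_add_eq_0 add.commute)
  have "g (Suc i) \<in> Iid n" if "i < N" for i
  proof (cases "odd (Suc i)")
    case True
    then show ?thesis unfolding g_def by (intro Iid_Const Iid_e_odd Rsym_compl_sym)
  next
    case False
    then have "odd (N - Suc i)" using less.prems that by presburger
    then have "compl_sym n (N - Suc i) \<in> Iid n" using that by (intro less.IH) auto
    then show ?thesis unfolding g_def by (intro Iid_Const Iid_mult_left Rsym_elem_sym)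
  qed
  then show ?case unfolding e by (intro Iid_uminus Iid_sum) auto
qed

lemma even_relation: assumes "a \<ge> 1"
  shows "(\<Sum>t\<le>a. elem_sym n (2*t) * compl_sym n (2*a - 2*t)) \<in> Iid n"
proof -
  define E where "E k = elem_sym n k * compl_sym n (2*a - k)" for k
  have N1: "2*a \<ge> 1" using assms by simp
  have f0: "(\<Sum>k\<le>2*a. Const ((-1)^k) * E k) = 0" using fund_identity[OF N1] by (simp add: E_def)
  have split: "(if even k then E k else 0) = Const ((-1)^k) * E k + (if even k then 0 else E k)" for k
    by (cases "even k") (simp_all add: Const_minus)
  have "(\<Sum>k\<le>2*a. (if even k then E k else 0)) = (\<Sum>k\<le>2*a. Const ((-1)^k) * E k) + (\<Sum>k\<le>2*a. (if even k then 0 else E k))"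
    by (simp only: split sum.distrib)
  also have "\<dots> = (\<Sum>k\<le>2*a. (if even k then 0 else E k))" using f0 by simp
  finally have e1: "(\<Sum>k\<le>2*a. (if even k then E k else 0)) = (\<Sum>k\<le>2*a. (if even k then 0 else E k))" .
  have odd_in: "(\<Sum>k\<le>2*a. (if even k then 0 else E k)) \<in> Iid n"
    by (intro Iid_sum) (auto simp: E_def intro: Iid.Iz Iid_e_odd Rsym_compl_sym)
  have "(\<Sum>k\<le>2*a. (if even k then E k else 0)) = (\<Sum>k\<in>{k\<in>{..2*a}. even k}. E k)"
    by (rule sum.inter_filter[symmetric]) simp
  also have "{k\<in>{..2*a}. even k} = (\<lambda>t. 2*t) ` {..a}" by (auto elim!: evenE)
  also have "(\<Sum>k\<in>(\<lambda>t. 2*t) ` {..a}. E k) = (\<Sum>t\<le>a. E (2*t))"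
    by (rule sum.reindex_cong[where l = "\<lambda>t. 2*t"]) (auto simp: inj_on_def)
  finally show ?thesis using e1 odd_in by (simp add: E_def)
qed

definition Gen :: "nat \<Rightarrow> mpoly set" where
  "Gen n = {(\<Prod>j<n div 2. compl_sym n (i j)) | i :: nat \<Rightarrow> nat. True}"

inductive_set Wset :: "nat \<Rightarrow> mpoly set" for n where
  Wg: "g \<in> Gen n \<Longrightarrow> Const c * g \<in> Wset n"
| Wi: "x \<in> Iid n \<Longrightarrow> x \<in> Wset n"
| Wa: "x \<in> Wset n \<Longrightarrow> y \<in> Wset n \<Longrightarrow> x + y \<in> Wset n"

lemma W_zero: "0 \<in> Wset n" by (rule Wset.Wi[OF Iid.Iz])

lemma W_Const: "x \<in> Wset n \<Longrightarrow> Const c * x \<in> Wset n"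
proof (induction rule: Wset.induct)
  case (Wg g d) then show ?case using Wset.Wg[of g n "c * d"] by (simp add: Const_mult mult.assoc)
next
  case (Wi x) then show ?case by (intro Wset.Wi Iid_Const)
next
  case (Wa x y) then show ?case by (simp add: distrib_left Wset.Wa)
qed

lemma neg_Const: "- (x::mpoly) = Const (-1) * x"
  by (rule poly_mapping_eqI) (simp add: lookup_Const_mult)

lemma W_uminus: "x \<in> Wset n \<Longrightarrow> - x \<in> Wset n"
  by (simp only: neg_Const W_Const)

lemma W_diff: "x \<in> Wset n \<Longrightarrow> y \<in> Wset n \<Longrightarrow> x - y \<in> Wset n"
  using Wset.Wa[of x n "- y"] W_uminus[of y n] by simp

lemma W_sum: "(\<And>i. i \<in> A \<Longrightarrow> f i \<in> Wset n) \<Longrightarrow> (\<Sum>i\<in>A. f i) \<in> Wset n"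
  by (induction A rule: infinite_finite_induct) (simp_all add: W_zero Wset.Wa)

definition act :: "mpoly \<Rightarrow> ((nat \<Rightarrow>\<^sub>0 nat) \<Rightarrow> mpoly) \<Rightarrow> (nat \<Rightarrow>\<^sub>0 nat) \<Rightarrow> mpoly" where
  "act p f a = (\<Sum>\<beta>\<in>ks p. Const (lk p \<beta>) * (if ple \<beta> a then f (a - \<beta>) else 0))"

lemma act_superset: assumes "finite S" "ks p \<subseteq> S"
  shows "act p f a = (\<Sum>\<beta>\<in>S. Const (lk p \<beta>) * (if ple \<beta> a then f (a - \<beta>) else 0))"
  unfolding act_def by (rule sum.mono_neutral_left) (use assms in \<open>auto simp: in_keys_iff\<close>)

lemma act_add: "act (p + q) f a = act p f a + act q f a"
proof -
  have f: "finite (ks p \<union> ks q)" by simp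
  have "act (p + q) f a = (\<Sum>\<beta>\<in>ks p \<union> ks q. Const (lk (p + q) \<beta>) * (if ple \<beta> a then f (a - \<beta>) else 0))"
    using keys_add[of p q] by (intro act_superset[OF f])
  also have "\<dots> = (\<Sum>\<beta>\<in>ks p \<union> ks q. Const (lk p \<beta>) * (if ple \<beta> a then f (a - \<beta>) else 0)) +
                  (\<Sum>\<beta>\<in>ks p \<union> ks q. Const (lk q \<beta>) * (if ple \<beta> a then f (a - \<beta>) else 0))"
    by (simp add: lookup_add Const_add distrib_right sum.distrib)
  also have "\<dots> = act p f a + act q f a"
    by (simp add: act_superset[OF f, symmetric])
  finally show ?thesis .
qed

lemma act_Const_mult: "act (Const c * p) f a = Const c * act p f a"
proof -
  have "act (Const c * p) f a = (\<Sum>\<beta>\<in>ks p. Const (lk (Const c * p) \<beta>) * (if ple \<beta> a then f (a - \<beta>) else 0))"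
    using keys_Const_mult[of c p] by (intro act_superset) auto
  also have "\<dots> = Const c * act p f a"
    by (simp add: act_def lookup_Const_mult Const_mult sum_distrib_left mult.assoc)
  finally show ?thesis .
qed

lemma act_zero: "act 0 f a = 0" by (simp add: act_def)

lemma act_uminus: "act (- p) f a = - act p f a"
  by (simp only: neg_Const act_Const_mult)

lemma act_diff: "act (p - q) f a = act p f a - act q f a"
  using act_add[of p "- q" f a] act_uminus[of q f a] by simp

lemma act_sum_left: "act (\<Sum>i\<in>I. p i) f a = (\<Sum>i\<in>I. act (p i) f a)"
  by (induction I rule: infinite_finite_induct) (simp_all add: act_zero act_add)

lemma act_single: "act (sg \<beta> c) f a = Const c * (if ple \<beta> a then f (a - \<beta>) else 0)"
  by (cases "c = 0") (simp_all add: act_def)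

lemma act_fadd: "act p (\<lambda>b. f b + g b) a = act p f a + act p g a"
proof -
  have "\<And>\<beta>. Const (lk p \<beta>) * (if ple \<beta> a then f (a - \<beta>) + g (a - \<beta>) else 0) =
     Const (lk p \<beta>) * (if ple \<beta> a then f (a - \<beta>) else 0) + Const (lk p \<beta>) * (if ple \<beta> a then g (a - \<beta>) else 0)"
    by (simp add: distrib_left)
  then show ?thesis by (simp add: act_def sum.distrib)
qed

lemma act_fzero: "act p (\<lambda>b. 0) a = 0"
  by (simp add: act_def)

lemma act_fsum: "act p (\<lambda>b. \<Sum>i\<in>I. f i b) a = (\<Sum>i\<in>I. act p (f i) a)"
proof (induction I rule: infinite_finite_induct)
  case (infinite A) then show ?case by (simp add: act_fzero)
next
  case empty then show ?case by (simp add: act_fzero)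
next
  case (insert x F) then show ?case by (simp add: act_fadd)
qed

lemma act_fcong: "(\<And>b. f b = g b) \<Longrightarrow> act p f a = act p g a"
proof -
  assume "\<And>b. f b = g b" then have "f = g" by (rule ext)
  then show ?thesis by simp
qed

lemma ple_add_iff: assumes "ple \<alpha> a" shows "ple \<beta> (a - \<alpha>) \<longleftrightarrow> ple (\<alpha> + \<beta>) a"
proof -
  have "lk \<beta> i \<le> lk a i - lk \<alpha> i \<longleftrightarrow> lk \<alpha> i + lk \<beta> i \<le> lk a i" for i
    using assms le_diff_conv2[of "lk \<alpha> i" "lk a i" "lk \<beta> i"] by (simp add: ple_def add.commute)
  then show ?thesis unfolding ple_def lookup_add lookup_minus_nat by (intro iff_allI) simp
qed

lemma ple_add_left: "ple (\<alpha> + \<beta>) a \<Longrightarrow> ple \<alpha> a"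
  by (auto simp: ple_def lookup_add) (metis add_leD1)

lemma minus_minus_pm: "(a::nat \<Rightarrow>\<^sub>0 nat) - \<alpha> - \<beta> = a - (\<alpha> + \<beta>)"
  by (rule poly_mapping_eqI) (simp add: lookup_minus_nat lookup_add)

lemma act_mult: "act (p * q) f a = act p (act q f) a"
proof -
  have "act (p * q) f a = (\<Sum>\<alpha>\<in>ks p. \<Sum>\<beta>\<in>ks q. act (sg (\<alpha> + \<beta>) (lk p \<alpha> * lk q \<beta>)) f a)"
    by (subst mult_expand) (simp add: act_sum_left)
  also have "\<dots> = (\<Sum>\<alpha>\<in>ks p. Const (lk p \<alpha>) * (if ple \<alpha> a then act q f (a - \<alpha>) else 0))"
  proof (rule sum.cong[OF refl])
    fix \<alpha>
    show "(\<Sum>\<beta>\<in>ks q. act (sg (\<alpha> + \<beta>) (lk p \<alpha> * lk q \<beta>)) f a) =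
          Const (lk p \<alpha>) * (if ple \<alpha> a then act q f (a - \<alpha>) else 0)"
    proof (cases "ple \<alpha> a")
      case True
      have "(\<Sum>\<beta>\<in>ks q. act (sg (\<alpha> + \<beta>) (lk p \<alpha> * lk q \<beta>)) f a) =
            (\<Sum>\<beta>\<in>ks q. Const (lk p \<alpha>) * (Const (lk q \<beta>) * (if ple \<beta> (a - \<alpha>) then f (a - \<alpha> - \<beta>) else 0)))"
        using True by (intro sum.cong refl) (simp add: act_single Const_mult ple_add_iff minus_minus_pm mult.assoc)
      also have "\<dots> = Const (lk p \<alpha>) * act q f (a - \<alpha>)"
        by (simp add: act_def sum_distrib_left)
      finally show ?thesis using True by simp
    next
      case False
      then have "\<And>\<beta>. \<not> ple (\<alpha> + \<beta>) a" using ple_add_left by blast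
      then show ?thesis using False by (simp add: act_single)
    qed
  qed
  also have "\<dots> = act p (act q f) a" by (simp add: act_def)
  finally show ?thesis .
qed

lemma act_one: "act 1 f a = f a"
proof -
  have e: "(1::mpoly) = sg 0 1" by simp
  have "act (sg 0 1) f a = f a" by (simp only: act_single) (simp add: ple_def)
  then show ?thesis by (subst e)
qed

lemma ple_single: "ple (sg l t) a \<longleftrightarrow> t \<le> lk a l"
  by (auto simp: ple_def lookup_single when_def)

lemma act_Var_power: "act (Var l ^ t) f a = (if t \<le> lk a l then f (a - sg l t) else 0)"
  by (simp add: Var_power act_single ple_single)

definition Zf :: "nat \<Rightarrow> ((nat \<Rightarrow>\<^sub>0 nat) \<Rightarrow> mpoly) \<Rightarrow> bool" where
  "Zf n f \<longleftrightarrow> (\<forall>a. f a \<in> Wset n)"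

lemma Zf_act: "Zf n f \<Longrightarrow> Zf n (act p f)"
  unfolding Zf_def act_def by (auto intro!: W_sum W_Const simp: W_zero)

definition injZ :: "nat \<Rightarrow> mpoly \<Rightarrow> bool" where
  "injZ n p \<longleftrightarrow> (\<forall>f. Zf n (act p f) \<longrightarrow> Zf n f)"

lemma add_single_minus: "(b::nat \<Rightarrow>\<^sub>0 nat) + sg l 1 - sg l 1 = b"
  by (rule poly_mapping_eqI) (simp add: lookup_minus_nat lookup_add)

lemma injZ_Var: "injZ n (Var l)"
  unfolding injZ_def Zf_def
proof (intro allI impI)
  fix f b assume h: "\<forall>a. act (Var l) f a \<in> Wset n"
  have "act (Var l) f (b + sg l 1) = f b"
    using act_Var_power[of l 1 f "b + sg l 1"] by (simp add: lookup_add add_single_minus)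
  then show "f b \<in> Wset n" using h by metis
qed

lemma injZ_Var_diff: assumes "l \<noteq> l'" shows "injZ n (Var l - Var l')"
  unfolding injZ_def Zf_def
proof (intro allI impI)
  fix f assume h: "\<forall>a. act (Var l - Var l') f a \<in> Wset n"
  have "\<forall>b. lk b l' = k \<longrightarrow> f b \<in> Wset n" for k
  proof (induction k)
    case 0
    show ?case
    proof (intro allI impI)
      fix b :: "nat \<Rightarrow>\<^sub>0 nat" assume b: "lk b l' = 0"
      have "act (Var l - Var l') f (b + sg l 1) = f b"
        using act_Var_power[of l 1 f "b + sg l 1"] act_Var_power[of l' 1 f "b + sg l 1"] b assms
        by (simp add: act_diff lookup_add add_single_minus lookup_single)
      then show "f b \<in> Wset n" using h by metis
    qed
  next
    case (Suc k)
    show ?case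
    proof (intro allI impI)
      fix b :: "nat \<Rightarrow>\<^sub>0 nat" assume b: "lk b l' = Suc k"
      define b' where "b' = b + sg l 1 - sg l' 1"
      have "lk b' l' = k" using b assms by (simp add: b'_def lookup_minus_nat lookup_add lookup_single)
      then have fb': "f b' \<in> Wset n" using Suc.IH by blast
      have "act (Var l - Var l') f (b + sg l 1) = f b - f b'"
        using act_Var_power[of l 1 f "b + sg l 1"] act_Var_power[of l' 1 f "b + sg l 1"] b assms
        by (simp add: act_diff lookup_add add_single_minus lookup_single b'_def)
      then have "f b = act (Var l - Var l') f (b + sg l 1) + f b'" by simp
      then show "f b \<in> Wset n" using h fb' by (metis Wset.Wa)
    qed
  qed
  then show "\<And>b. f b \<in> Wset n" by blast
qed

lemma Zf_diff: "Zf n f \<Longrightarrow> Zf n g \<Longrightarrow> Zf n (\<lambda>a. f a - g a)"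
  unfolding Zf_def by (auto intro: W_diff)

lemma root_lemma:
  "(\<forall>l<N. \<forall>l'<N. l \<noteq> l' \<longrightarrow> injZ n (r l - r l')) \<Longrightarrow>
   (\<forall>l<N. Zf n (\<lambda>a. \<Sum>j<N. act (r l ^ j) (u j) a)) \<Longrightarrow> j < N \<Longrightarrow> Zf n (u j)"
proof (induction N arbitrary: u j)
  case 0 then show ?case by simp
next
  case (Suc d)
  define q where "q i = (\<lambda>a. \<Sum>j'\<in>{Suc i..d}. act (r d ^ (j' - Suc i)) (u j') a)" for i
  have claim1: "(\<Sum>j<Suc d. act (r l ^ j) (u j) a) - (\<Sum>j<Suc d. act (r d ^ j) (u j) a) =
      act (r l - r d) (\<lambda>b. \<Sum>i<d. act (r l ^ i) (q i) b) a" for l a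
  proof -
    have inner: "act (\<Sum>i<j. r d ^ (j - Suc i) * r l ^ i) g = (\<lambda>b. \<Sum>i<j. act (r l ^ i) (act (r d ^ (j - Suc i)) g) b)"
      for j g
      by (rule ext) (simp add: act_sum_left act_mult[symmetric] mult.commute)
    have "(\<Sum>j<Suc d. act (r l ^ j) (u j) a) - (\<Sum>j<Suc d. act (r d ^ j) (u j) a) =
        (\<Sum>j<Suc d. act (r l ^ j - r d ^ j) (u j) a)"
      by (simp add: act_diff sum_subtractf)
    also have "\<dots> = (\<Sum>j<Suc d. act ((r l - r d) * (\<Sum>i<j. r d ^ (j - Suc i) * r l ^ i)) (u j) a)"
      by (simp only: power_diff_sumr2)
    also have "\<dots> = (\<Sum>j<Suc d. act (r l - r d) (\<lambda>b. \<Sum>i<j. act (r l ^ i) (act (r d ^ (j - Suc i)) (u j)) b) a)"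
      by (simp only: act_mult inner)
    also have "\<dots> = act (r l - r d) (\<lambda>b. \<Sum>j<Suc d. \<Sum>i<j. act (r l ^ i) (act (r d ^ (j - Suc i)) (u j)) b) a"
      by (simp only: act_fsum)
    also have "\<dots> = act (r l - r d) (\<lambda>b. \<Sum>i<d. act (r l ^ i) (q i) b) a"
    proof (rule act_fcong)
      fix b
      have "(\<Sum>j<Suc d. \<Sum>i<j. act (r l ^ i) (act (r d ^ (j - Suc i)) (u j)) b) =
            (\<Sum>j\<le>d. \<Sum>i<j. act (r l ^ i) (act (r d ^ (j - Suc i)) (u j)) b)"
        by (simp only: lessThan_Suc_atMost)
      also have "\<dots> = (\<Sum>i<d. \<Sum>j\<in>{Suc i..d}. act (r l ^ i) (act (r d ^ (j - Suc i)) (u j)) b)"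
        by (rule sum.nested_swap')
      also have "\<dots> = (\<Sum>i<d. act (r l ^ i) (q i) b)"
        by (simp only: q_def act_fsum)
      finally show "(\<Sum>j<Suc d. \<Sum>i<j. act (r l ^ i) (act (r d ^ (j - Suc i)) (u j)) b) =
            (\<Sum>i<d. act (r l ^ i) (q i) b)" .
    qed
    finally show ?thesis .
  qed
  have Zd: "Zf n (\<lambda>a. \<Sum>j<Suc d. act (r d ^ j) (u j) a)" using Suc.prems(2) by simp
  have Zq_poly: "Zf n (\<lambda>a. \<Sum>i<d. act (r l ^ i) (q i) a)" if l: "l < d" for l
  proof -
    have e: "(\<lambda>a. (\<Sum>j<Suc d. act (r l ^ j) (u j) a) - (\<Sum>j<Suc d. act (r d ^ j) (u j) a)) =
        act (r l - r d) (\<lambda>b. \<Sum>i<d. act (r l ^ i) (q i) b)"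
      by (rule ext, rule claim1)
    have "l < Suc d" using l by simp
    then have "Zf n (\<lambda>a. (\<Sum>j<Suc d. act (r l ^ j) (u j) a) - (\<Sum>j<Suc d. act (r d ^ j) (u j) a))"
      using Suc.prems(2) Zd by (intro Zf_diff) auto
    then have "Zf n (act (r l - r d) (\<lambda>b. \<Sum>i<d. act (r l ^ i) (q i) b))"
      by (simp only: e)
    moreover have "injZ n (r l - r d)" using Suc.prems(1) l by simp
    ultimately show ?thesis by (simp add: injZ_def)
  qed
  have Zq: "Zf n (q i)" if "i < d" for i
    using Suc.IH[of q i] Suc.prems(1) Zq_poly that by simp
  define Qf where "Qf j = (\<lambda>a. \<Sum>j'\<in>{j..d}. act (r d ^ (j' - j)) (u j') a)" for j
  have QfA: "Qf j a = u j a + act (r d) (q j) a" if "j \<le> d" for j a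
  proof -
    have "Qf j a = act (r d ^ (j - j)) (u j) a + (\<Sum>j'\<in>{Suc j..d}. act (r d ^ (j' - j)) (u j') a)"
      unfolding Qf_def using that by (simp add: sum.atLeast_Suc_atMost)
    also have "act (r d ^ (j - j)) (u j) a = u j a" by (simp add: act_one)
    also have "(\<Sum>j'\<in>{Suc j..d}. act (r d ^ (j' - j)) (u j') a) =
               (\<Sum>j'\<in>{Suc j..d}. act (r d) (act (r d ^ (j' - Suc j)) (u j')) a)"
    proof (rule sum.cong[OF refl])
      fix j' assume "j' \<in> {Suc j..d}"
      then have "r d ^ (j' - j) = r d * r d ^ (j' - Suc j)" by (simp add: Suc_diff_Suc[symmetric] del: Suc_diff_Suc)
      then show "act (r d ^ (j' - j)) (u j') a = act (r d) (act (r d ^ (j' - Suc j)) (u j')) a"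
        by (simp add: act_mult)
    qed
    also have "\<dots> = act (r d) (q j) a" by (simp only: q_def act_fsum)
    finally show ?thesis .
  qed
  have QfZ: "Zf n (Qf j)" if "j \<le> d" for j
  proof (cases j)
    case 0
    have "Qf 0 = (\<lambda>a. \<Sum>j<Suc d. act (r d ^ j) (u j) a)"
      unfolding Qf_def by (simp add: atLeast0AtMost lessThan_Suc_atMost)
    then show ?thesis using Zd 0 by simp
  next
    case (Suc i)
    then have "Qf j = q i" by (simp add: Qf_def q_def)
    then show ?thesis using Zq[of i] Suc that by simp
  qed
  have actq: "Zf n (act (r d) (q j))" if "j \<le> d" for j
  proof (cases "j < d")
    case True then show ?thesis using Zq Zf_act by blast
  next
    case False
    then have "q j = (\<lambda>a. 0)" using that by (simp add: q_def)
    then show ?thesis by (simp add: Zf_def act_fzero W_zero)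
  qed
  have "u j a = Qf j a - act (r d) (q j) a" for a using QfA[of j a] Suc.prems(3) by simp
  then show ?case using Zf_diff[OF QfZ actq] Suc.prems(3) by (simp add: Zf_def)
qed

definition Gf :: "nat \<Rightarrow> (nat \<Rightarrow>\<^sub>0 nat) \<Rightarrow> mpoly" where
  "Gf n a = (\<Prod>i<n div 2. compl_sym n (2 * lk a i))"

lemma Gf_Gen: "Gf n a \<in> Gen n"
  unfolding Gf_def Gen_def mem_Collect_eq by (rule exI[of _ "\<lambda>i. 2 * lk a i"]) simp

lemma Gf_split: assumes "l < n div 2"
  shows "Gf n a = compl_sym n (2 * lk a l) * (\<Prod>i\<in>{..<n div 2} - {l}. compl_sym n (2 * lk a i))"
  unfolding Gf_def using assms by (simp add: prod.remove)

lemma Gf_minus: assumes "l < n div 2" "t \<le> lk a l"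
  shows "Gf n (a - sg l t) = compl_sym n (2 * (lk a l - t)) * (\<Prod>i\<in>{..<n div 2} - {l}. compl_sym n (2 * lk a i))"
proof -
  have "Gf n (a - sg l t) = compl_sym n (2 * lk (a - sg l t) l) *
          (\<Prod>i\<in>{..<n div 2} - {l}. compl_sym n (2 * lk (a - sg l t) i))"
    by (rule Gf_split[OF assms(1)])
  also have "(\<Prod>i\<in>{..<n div 2} - {l}. compl_sym n (2 * lk (a - sg l t) i)) =
             (\<Prod>i\<in>{..<n div 2} - {l}. compl_sym n (2 * lk a i))"
    by (rule prod.cong[OF refl]) (simp add: lookup_minus_nat lookup_single)
  finally show ?thesis by (simp add: lookup_minus_nat)
qed

lemma relation_W: assumes l: "l < n div 2"
  shows "(\<Sum>j<n div 2. act (Var l ^ Suc j) (\<lambda>b. elem_sym n (2 * Suc j) * Gf n b) a) \<in> Wset n"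
proof -
  define m where "m = n div 2"
  define A where "A = lk a l"
  define P where "P = (\<Prod>i\<in>{..<m} - {l}. compl_sym n (2 * lk a i))"
  define X where "X t = elem_sym n (2 * t) * compl_sym n (2 * A - 2 * t)" for t
  have PR: "P \<in> Rsym n" unfolding P_def by (intro Rsym_prod Rsym_compl_sym)
  have X0: "X t = 0" if "t > m" for t
  proof -
    have "n < 2 * t" using that by (simp add: m_def)
    then show ?thesis by (simp add: X_def elem_sym_big)
  qed
  have "(\<Sum>j<m. act (Var l ^ Suc j) (\<lambda>b. elem_sym n (2 * Suc j) * Gf n b) a) =
        (\<Sum>j<m. (if Suc j \<le> A then X (Suc j) else 0) * P)"
  proof (rule sum.cong[OF refl])
    fix j assume "j \<in> {..<m}"
    show "act (Var l ^ Suc j) (\<lambda>b. elem_sym n (2 * Suc j) * Gf n b) a = (if Suc j \<le> A then X (Suc j) else 0) * P"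
      using l by (simp only: act_Var_power) (simp add: Gf_minus A_def X_def P_def m_def mult.assoc diff_mult_distrib2)
  qed
  also have "\<dots> = (\<Sum>j<m. (if Suc j \<le> A then X (Suc j) else 0)) * P"
    by (simp add: sum_distrib_right)
  also have "(\<Sum>j<m. (if Suc j \<le> A then X (Suc j) else 0)) = (\<Sum>j<m + A. (if Suc j \<le> A then X (Suc j) else 0))"
    by (rule sum.mono_neutral_left) (auto simp: X0)
  also have "\<dots> = (\<Sum>j<A. X (Suc j))"
  proof -
    have "(\<Sum>j<m + A. (if Suc j \<le> A then X (Suc j) else 0)) = (\<Sum>j<A. (if Suc j \<le> A then X (Suc j) else 0))"
      by (rule sum.mono_neutral_right) auto
    then show ?thesis by simp
  qed
  finally have e: "(\<Sum>j<m. act (Var l ^ Suc j) (\<lambda>b. elem_sym n (2 * Suc j) * Gf n b) a) = (\<Sum>j<A. X (Suc j)) * P" .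
  show ?thesis
  proof (cases "A = 0")
    case True then show ?thesis using e by (simp add: m_def W_zero)
  next
    case False
    have "(\<Sum>t\<le>A. X t) = X 0 + (\<Sum>j<A. X (Suc j))" by (rule sum.atMost_shift)
    also have "X 0 = compl_sym n (2 * A)" by (simp add: X_def elem_sym_0)
    finally have e2: "(\<Sum>j<A. X (Suc j)) * P = (\<Sum>t\<le>A. X t) * P - compl_sym n (2 * A) * P"
      by (simp add: algebra_simps)
    have i1: "(\<Sum>t\<le>A. X t) * P \<in> Wset n"
      using even_relation[where a=A and n=n] False PR by (intro Wset.Wi Iid_mult_right) (auto simp: X_def)
    have "compl_sym n (2 * A) * P = Gf n a" using Gf_split[OF l, of a] by (simp add: A_def P_def m_def)
    then have i2: "compl_sym n (2 * A) * P \<in> Wset n" using Wset.Wg[OF Gf_Gen[of n a], where c=1] by simp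
    show ?thesis using e e2 W_diff[OF i1 i2] by (simp add: m_def)
  qed
qed

lemma even_times_Gf: assumes "j < n div 2" shows "elem_sym n (2 * Suc j) * Gf n a \<in> Wset n"
proof -
  define u where "u j = (\<lambda>b. elem_sym n (2 * Suc j) * Gf n b)" for j
  have p1: "\<forall>l<n div 2. \<forall>l'<n div 2. l \<noteq> l' \<longrightarrow> injZ n (Var l - Var l')"
    by (auto intro: injZ_Var_diff)
  have p2: "\<forall>l<n div 2. Zf n (\<lambda>a. \<Sum>j<n div 2. act (Var l ^ j) (u j) a)"
  proof (intro allI impI)
    fix l assume l: "l < n div 2"
    have "act (Var l) (\<lambda>a. \<Sum>j<n div 2. act (Var l ^ j) (u j) a) b =
          (\<Sum>j<n div 2. act (Var l ^ Suc j) (u j) b)" for b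
      by (simp add: act_fsum act_mult[symmetric])
    then have "Zf n (act (Var l) (\<lambda>a. \<Sum>j<n div 2. act (Var l ^ j) (u j) a))"
      using relation_W[OF l] by (simp add: Zf_def u_def)
    then show "Zf n (\<lambda>a. \<Sum>j<n div 2. act (Var l ^ j) (u j) a)"
      using injZ_Var[of n l] by (simp add: injZ_def)
  qed
  have "Zf n (u j)" by (rule root_lemma[OF p1 p2 assms])
  then show ?thesis by (simp add: Zf_def u_def)
qed

lemma W_Rsym_part: "x \<in> Iid n \<Longrightarrow> elem_sym n k * x \<in> Wset n"
  by (intro Wset.Wi Iid_mult_left Rsym_elem_sym)

lemma W_mult_even: assumes t: "1 \<le> t" "t \<le> n div 2" and x: "x \<in> Wset n"
  shows "elem_sym n (2 * t) * x \<in> Wset n"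
  using x
proof (induction rule: Wset.induct)
  case (Wg g c)
  have "\<exists>i. g = (\<Prod>j<n div 2. compl_sym n (i j))" using Wg by (simp add: Gen_def)
  then obtain i where g: "g = (\<Prod>j<n div 2. compl_sym n (i j))" by (elim exE)
  show ?case
  proof (cases "\<exists>j<n div 2. odd (i j)")
    case True
    then obtain j where j: "j < n div 2" "odd (i j)" by blast
    have "g = compl_sym n (i j) * (\<Prod>j'\<in>{..<n div 2} - {j}. compl_sym n (i j'))"
      unfolding g using j by (simp add: prod.remove)
    then have "g \<in> Iid n"
      using compl_sym_odd_Iid[OF j(2)] by (simp add: Iid_mult_right Rsym_prod Rsym_compl_sym)
    then have "Const c * g \<in> Iid n" by (rule Iid_Const)
    then show ?thesis by (rule W_Rsym_part)
  next
    case False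
    define a where "a = (\<Sum>j<n div 2. sg j (i j div 2))"
    have la: "lk a j = i j div 2" if "j < n div 2" for j
      using that by (simp add: a_def lookup_sum lookup_single when_def)
    have "Gf n a = g" unfolding Gf_def g
      by (rule prod.cong[OF refl]) (use False la in auto)
    obtain s where s: "t = Suc s" using t by (cases t) auto
    have "elem_sym n (2 * Suc s) * Gf n a \<in> Wset n" using t s by (intro even_times_Gf) auto
    then have "Const c * (elem_sym n (2 * t) * g) \<in> Wset n" using \<open>Gf n a = g\<close> s by (simp add: W_Const)
    then show ?thesis by (simp add: mult.left_commute)
  qed
next
  case (Wi x) then show ?case by (rule W_Rsym_part)
next
  case (Wa x y) then show ?case by (simp add: distrib_left Wset.Wa)
qed

lemma Gf_zero: "Gf n 0 = 1" by (simp add: Gf_def compl_sym_0)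

lemma W_one: "1 \<in> Wset n"
  using Wset.Wg[OF Gf_Gen[of n 0], where c=1] by (simp add: Gf_zero)

lemma eprodc_W: assumes "\<And>k. odd k \<Longrightarrow> c k = 0"
  shows "eprodc n c \<in> Wset n"
proof -
  have "S \<subseteq> {1..n} \<Longrightarrow> (\<Prod>k\<in>S. elem_sym n k ^ c k) \<in> Wset n" for S
  proof (induction S rule: infinite_finite_induct)
    case (infinite A) then show ?case using finite_subset[of A "{1..n}"] by simp
  next
    case empty then show ?case by (simp add: W_one)
  next
    case (insert k F)
    have X: "(\<Prod>k\<in>F. elem_sym n k ^ c k) \<in> Wset n" using insert by simp
    have k: "k \<in> {1..n}" using insert.prems by simp
    have "elem_sym n k ^ p * (\<Prod>k\<in>F. elem_sym n k ^ c k) \<in> Wset n" if "p = 0 \<or> even k" for p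
      using that
    proof (induction p)
      case 0 then show ?case using X by simp
    next
      case (Suc p)
      then have ev: "even k" by simp
      then obtain t where kt: "k = 2 * t" by (rule evenE)
      have "1 \<le> t" "t \<le> n div 2" using k kt by auto
      then have "elem_sym n (2 * t) * (elem_sym n k ^ p * (\<Prod>k\<in>F. elem_sym n k ^ c k)) \<in> Wset n"
        using Suc ev by (intro W_mult_even) auto
      then show ?case using kt by (simp add: mult.assoc)
    qed
    then show ?case using insert assms by (cases "even k") auto
  qed
  then show ?thesis unfolding eprodc_def by simp
qed

definition hom :: "nat \<Rightarrow> mpoly \<Rightarrow> mpoly" where
  "hom D p = (\<Sum>\<gamma>\<in>ks p. if mdeg \<gamma> = D then sg \<gamma> (lk p \<gamma>) else 0)"

lemma lookup_hom: "lk (hom D p) \<gamma> = (if mdeg \<gamma> = D then lk p \<gamma> else 0)"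
proof -
  have "lk (hom D p) \<gamma> = (\<Sum>\<gamma>'\<in>ks p. if mdeg \<gamma>' = D then (lk p \<gamma>' when \<gamma>' = \<gamma>) else 0)"
    by (simp add: hom_def lookup_sum lookup_single if_distrib[of "\<lambda>x. lk x \<gamma>"] cong: if_cong)
  also have "\<dots> = (\<Sum>\<gamma>'\<in>ks p. if \<gamma>' = \<gamma> then (if mdeg \<gamma> = D then lk p \<gamma> else 0) else 0)"
    by (rule sum.cong[OF refl]) (auto simp: when_def)
  also have "\<dots> = (if mdeg \<gamma> = D then lk p \<gamma> else 0)"
    by (cases "\<gamma> \<in> ks p") (simp_all add: sum.delta in_keys_iff)
  finally show ?thesis .
qed

lemma keys_hom: "ks (hom D p) \<subseteq> ks p"
  by (auto simp: in_keys_iff lookup_hom split: if_splits)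

lemma hom_add: "hom D (p + q) = hom D p + hom D q"
  by (rule poly_mapping_eqI) (simp add: lookup_hom lookup_add)

lemma hom_zero: "hom D 0 = 0"
  by (rule poly_mapping_eqI) (simp add: lookup_hom)

lemma hom_Const_mult: "hom D (Const c * p) = Const c * hom D p"
  by (rule poly_mapping_eqI) (simp add: lookup_hom lookup_Const_mult)

lemma hom_homog_id: "homog D p \<Longrightarrow> hom D p = p"
  by (rule poly_mapping_eqI) (auto simp: lookup_hom homog_def in_keys_iff)

lemma hom_homog_zero: "homog E p \<Longrightarrow> E \<noteq> D \<Longrightarrow> hom D p = 0"
  by (rule poly_mapping_eqI) (auto simp: lookup_hom homog_def in_keys_iff)

lemma degle_hom: "degle D (hom D p)"
  by (auto simp: degle_def in_keys_iff lookup_hom split: if_splits)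

lemma lookup_mult_superset: assumes "finite A" "ks p \<subseteq> A" "finite B" "ks q \<subseteq> B"
  shows "lk ((p::mpoly) * q) \<gamma> = (\<Sum>a\<in>A. \<Sum>b\<in>B. (lk p a * lk q b when a + b = \<gamma>))"
proof -
  have "lk (p * q) \<gamma> = (\<Sum>a\<in>ks p. \<Sum>b\<in>ks q. (lk p a * lk q b when a + b = \<gamma>))"
    by (rule lookup_mult_expand)
  also have "\<dots> = (\<Sum>a\<in>ks p. \<Sum>b\<in>B. (lk p a * lk q b when a + b = \<gamma>))"
    by (intro sum.cong refl sum.mono_neutral_left) (use assms in \<open>auto simp: in_keys_iff\<close>)
  also have "\<dots> = (\<Sum>a\<in>A. \<Sum>b\<in>B. (lk p a * lk q b when a + b = \<gamma>))"
    by (intro sum.mono_neutral_left) (use assms in \<open>auto simp: in_keys_iff\<close>)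
  finally show ?thesis .
qed

lemma hom_mult_homog: assumes q: "homog k q" and kD: "k \<le> D"
  shows "hom D (q * p) = q * hom (D - k) p"
proof (rule poly_mapping_eqI)
  fix \<gamma>
  have "lk (q * hom (D - k) p) \<gamma> = (\<Sum>a\<in>ks q. \<Sum>b\<in>ks p. (lk q a * lk (hom (D - k) p) b when a + b = \<gamma>))"
    using keys_hom[of "D - k" p] by (intro lookup_mult_superset) auto
  also have "\<dots> = (\<Sum>a\<in>ks q. \<Sum>b\<in>ks p. (if mdeg \<gamma> = D then (lk q a * lk p b when a + b = \<gamma>) else 0))"
  proof (intro sum.cong refl)
    fix a b assume a: "a \<in> ks q" and "b \<in> ks p"
    have ma: "mdeg a = k" using q a by (simp add: homog_def)
    show "(lk q a * lk (hom (D - k) p) b when a + b = \<gamma>) = (if mdeg \<gamma> = D then (lk q a * lk p b when a + b = \<gamma>) else 0)"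
      using ma kD by (auto simp: lookup_hom when_def mdeg_add)
  qed
  also have "\<dots> = (if mdeg \<gamma> = D then lk (q * p) \<gamma> else 0)"
    by (simp add: lookup_mult_expand)
  also have "\<dots> = lk (hom D (q * p)) \<gamma>" by (simp add: lookup_hom)
  finally show "lk (hom D (q * p)) \<gamma> = lk (q * hom (D - k) p) \<gamma>" by simp
qed

lemma hom_mult_homog_big: assumes q: "homog k q" and kD: "D < k"
  shows "hom D (q * p) = 0"
proof (rule poly_mapping_eqI)
  fix \<gamma>
  have "lk (q * p) \<gamma> = 0" if "mdeg \<gamma> = D"
  proof -
    have "(lk q a * lk p b when a + b = \<gamma>) = 0" if "a \<in> ks q" for a b
      using q that \<open>mdeg \<gamma> = D\<close> kD by (auto simp: homog_def when_def mdeg_add)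
    then show ?thesis by (simp add: lookup_mult_expand)
  qed
  then show "lk (hom D (q * p)) \<gamma> = lk 0 \<gamma>" by (simp add: lookup_hom)
qed

lemma in_vars_lookup_zero: "in_vars n p \<Longrightarrow> \<not> ks \<gamma> \<subseteq> {..<n} \<Longrightarrow> lk p \<gamma> = 0"
  unfolding in_vars_def by (metis in_keys_iff)

lemma hom_Rsym: assumes "p \<in> Rsym n" shows "hom D p \<in> Rsym n"
proof -
  have iv: "in_vars n p" and sy: "symm n p" using assms by (auto simp: Rsym_iff)
  have "in_vars n (hom D p)" using iv keys_hom[of D p] by (auto simp: in_vars_def)
  moreover have "symm n (hom D p)"
    unfolding symm_def
  proof (intro allI impI)
    fix \<sigma> :: "nat \<Rightarrow> nat" and m assume s: "\<sigma> permutes {..<n}"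
    show "lk (hom D p) (Poly_Mapping.map_key \<sigma> m) = lk (hom D p) m"
    proof (cases "ks m \<subseteq> {..<n}")
      case True
      then show ?thesis using sy s by (simp add: lookup_hom mdeg_map_key_perm[OF s True] symm_def)
    next
      case False
      then have "\<not> ks (Poly_Mapping.map_key \<sigma> m) \<subseteq> {..<n}" using keys_map_key_perm[OF s] by blast
      then show ?thesis using False iv by (simp add: lookup_hom in_vars_lookup_zero)
    qed
  qed
  ultimately show ?thesis by (simp add: Rsym_iff)
qed

abbreviation MM :: "nat \<Rightarrow> mpoly set" where
  "MM n \<equiv> module_span (Rodd n) (Gen n)"

lemma MM_Const_mult: "x \<in> MM n \<Longrightarrow> Const c * x \<in> MM n"
  by (rule ms_smul) (auto intro: Rodd_Const Rodd_mult)

lemma MM_elem_mult: "odd k \<Longrightarrow> k \<le> n \<Longrightarrow> x \<in> MM n \<Longrightarrow> elem_sym n k * x \<in> MM n"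
  by (rule ms_smul) (auto intro: Rodd_elem Rodd_mult)

lemma homog_Gen: "g \<in> Gen n \<Longrightarrow> \<exists>E. homog E g"
proof -
  assume "g \<in> Gen n"
  then have "\<exists>i. g = (\<Prod>j<n div 2. compl_sym n (i j))" by (simp add: Gen_def)
  then obtain i where g: "g = (\<Prod>j<n div 2. compl_sym n (i j))" by (elim exE)
  have "homog (\<Sum>j<n div 2. i j) g" unfolding g by (intro homog_prod homog_compl_sym) simp
  then show ?thesis by blast
qed

lemma Gen_MM: "g \<in> Gen n \<Longrightarrow> g \<in> MM n"
  using ms_gen[OF Rodd_Const[of 1 n], of g "Gen n"] by simp

lemma projection:
  assumes IH: "\<And>r D'. D' < D \<Longrightarrow> r \<in> Rsym n \<Longrightarrow> degle D' r \<Longrightarrow> r \<in> MM n"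
    and x: "x \<in> Wset n"
  shows "hom D x \<in> MM n"
  using x
proof (induction rule: Wset.induct)
  case (Wg g c)
  obtain E where E: "homog E g" using homog_Gen[OF Wg] by blast
  show ?case
  proof (cases "E = D")
    case True
    then have "hom D (Const c * g) = Const c * g" using E by (simp add: hom_Const_mult hom_homog_id)
    then show ?thesis using Gen_MM[OF Wg] by (simp add: MM_Const_mult)
  next
    case False
    then have "hom D (Const c * g) = 0" using E by (simp add: hom_Const_mult hom_homog_zero)
    then show ?thesis by (simp add: ms_zero)
  qed
next
  case (Wi x)
  then show ?case
  proof (induction rule: Iid.induct)
    case Iz then show ?case by (simp add: hom_zero ms_zero)
  next
    case (Io k r)
    show ?case
    proof (cases "k \<le> D")
      case True
      have "hom D (elem_sym n k * r) = elem_sym n k * hom (D - k) r"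
        using True by (intro hom_mult_homog homog_elem_sym)
      moreover have "hom (D - k) r \<in> MM n"
        using Io True by (intro IH[of "D - k"] hom_Rsym degle_hom) (auto elim: oddE)
      ultimately show ?thesis using Io by (simp add: MM_elem_mult)
    next
      case False
      then have "hom D (elem_sym n k * r) = 0" by (intro hom_mult_homog_big[OF homog_elem_sym]) simp
      then show ?thesis by (simp add: ms_zero)
    qed
  next
    case (Ia x y) then show ?case by (simp add: hom_add ms_add)
  qed
next
  case (Wa x y) then show ?case by (simp add: hom_add ms_add)
qed

lemma main_step:
  assumes IH: "\<And>r D'. D' < D \<Longrightarrow> r \<in> Rsym n \<Longrightarrow> degle D' r \<Longrightarrow> r \<in> MM n"
  shows "p \<in> Rsym n \<Longrightarrow> degle D p \<Longrightarrow> p \<in> MM n"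
proof -
  define SD where "SD = {\<gamma>::nat \<Rightarrow>\<^sub>0 nat. ks \<gamma> \<subseteq> {..<n} \<and> mdeg \<gamma> \<le> D}"
  have fin: "finite SD" using finite_monos[of "{..<n}" D] by (simp add: SD_def)
  have main: "\<forall>p. p \<in> Rsym n \<longrightarrow> degle D p \<longrightarrow> p \<noteq> 0 \<longrightarrow> card {\<gamma>\<in>SD. \<gamma> \<le> Max (ks p)} = K \<longrightarrow> p \<in> MM n" for K
  proof (induction K rule: less_induct)
    case (less K)
    show ?case
    proof (intro allI impI)
      fix p assume pR: "p \<in> Rsym n" and pd: "degle D p" and p0: "p \<noteq> 0"
        and pK: "card {\<gamma>\<in>SD. \<gamma> \<le> Max (ks p)} = K"
      define \<alpha> where "\<alpha> = Max (ks p)"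
      have ne: "ks p \<noteq> {}" using p0 by (metis keys_eq_empty)
      have \<alpha>k: "\<alpha> \<in> ks p" unfolding \<alpha>_def by (rule Max_in[OF finite_keys ne])
      have le: "\<gamma> \<le> \<alpha>" if "\<gamma> \<in> ks p" for \<gamma> unfolding \<alpha>_def by (rule Max_ge) (simp_all add: that)
      have lp: "lead p \<alpha> (lk p \<alpha>)" using \<alpha>k le by (simp add: lead_def in_keys_iff)
      have iv: "in_vars n p" and sy: "symm n p" using pR by (auto simp: Rsym_iff)
      have \<alpha>n: "ks \<alpha> \<subseteq> {..<n}" using iv \<alpha>k by (simp add: in_vars_def)
      have \<alpha>D: "mdeg \<alpha> \<le> D" using pd \<alpha>k by (simp add: degle_def)
      have sorted: "lk \<alpha> (Suc i) \<le> lk \<alpha> i" for i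
      proof (cases "Suc i < n")
        case True then show ?thesis using lead_sorted[OF sy lp] by blast
      next
        case False then have "Suc i \<notin> ks \<alpha>" using \<alpha>n by auto
        then show ?thesis by (simp add: in_keys_iff)
      qed
      define c where "c = cexp \<alpha>"
      define q where "q = eprodc n c"
      have lq: "lead q \<alpha> 1" using lead_eprodc[of n c] cexp_exponent[OF \<alpha>n sorted] by (simp add: q_def c_def)
      define Dq where "Dq = (\<Sum>k\<in>{1..n}. c k * k)"
      have hq: "homog Dq q" unfolding q_def Dq_def by (rule homog_eprodc)
      have \<alpha>q: "\<alpha> \<in> ks q" using lq by (simp add: lead_def in_keys_iff)
      have "mdeg \<alpha> = Dq" using hq \<alpha>q by (simp add: homog_def)
      then have DqD: "Dq \<le> D" using \<alpha>D by simp
      have qR: "q \<in> Rsym n" by (simp add: q_def Rsym_eprodc)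
      have IHq: "r \<in> MM n" if "D' < Dq" "r \<in> Rsym n" "degle D' r" for r D'
        using IH[of D' r] that DqD by simp
      have qM: "q \<in> MM n"
      proof (cases "\<exists>k\<in>{1..n}. odd k \<and> c k \<ge> 1")
        case True
        then obtain k where k: "k \<in> {1..n}" "odd k" "c k \<ge> 1" by blast
        define c' where "c' = c(k := c k - 1)"
        have qs: "q = elem_sym n k * eprodc n c'" unfolding q_def c'_def by (rule eprodc_split[where c=c, OF k(1) k(3)])
        have sumeq: "(\<Sum>k'\<in>{1..n}. c' k' * k') + k = Dq"
        proof -
          have a: "(\<Sum>k'\<in>{1..n}. c' k' * k') = c' k * k + (\<Sum>k'\<in>{1..n}-{k}. c' k' * k')"
            using k(1) by (simp add: sum.remove)
          have b: "Dq = c k * k + (\<Sum>k'\<in>{1..n}-{k}. c k' * k')"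
            using k(1) by (simp add: Dq_def sum.remove)
          have d: "(\<Sum>k'\<in>{1..n}-{k}. c' k' * k') = (\<Sum>k'\<in>{1..n}-{k}. c k' * k')"
            by (rule sum.cong) (simp_all add: c'_def)
          have e: "c' k * k + k = c k * k"
          proof -
            obtain t where t: "c k = Suc t" using k(3) by (cases "c k") auto
            then show ?thesis by (simp add: c'_def)
          qed
          show ?thesis using a b d e by simp
        qed
        have lt: "(\<Sum>k'\<in>{1..n}. c' k' * k') < Dq" using k(1) sumeq by auto
        have "eprodc n c' \<in> MM n"
          by (rule IHq[OF lt Rsym_eprodc homog_degle[OF homog_eprodc]])
        then show ?thesis unfolding qs using k by (intro MM_elem_mult) auto
      next
        case False
        have codd: "c k = 0" if ko: "odd k" for k
        proof (cases "k \<in> {1..n}")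
          case True then show ?thesis using False ko by auto
        next
          case F2: False
          have "k \<ge> 1" using ko by (cases k) auto
          then have kn: "n < k" using F2 by auto
          have "k - 1 \<notin> ks \<alpha>" "k \<notin> ks \<alpha>" using \<alpha>n kn by auto
          then show ?thesis by (simp add: c_def cexp_def in_keys_iff)
        qed
        have "q \<in> Wset n" unfolding q_def by (rule eprodc_W) (rule codd)
        then have "hom Dq q \<in> MM n" using projection[where D = Dq and n = n and x = q] IHq by blast
        then show ?thesis using hq by (simp add: hom_homog_id)
      qed
      define p' where "p' = p - Const (lk p \<alpha>) * q"
      have p'R: "p' \<in> Rsym n" by (simp add: p'_def Rsym_diff Rsym_mult Rsym_Const pR qR)
      have p'd: "degle D p'" unfolding p'_def
        by (intro degle_diff pd degle_Const_mult degle_mono[OF homog_degle[OF hq] DqD])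
      have p'keys: "\<gamma> < \<alpha>" if g: "\<gamma> \<in> ks p'" for \<gamma>
      proof -
        have "lk p' \<gamma> \<noteq> 0" using g by (simp add: in_keys_iff)
        then have "lk p \<gamma> \<noteq> 0 \<or> lk q \<gamma> \<noteq> 0" by (auto simp: p'_def lookup_minus lookup_Const_mult)
        then have "\<gamma> \<in> ks p \<or> \<gamma> \<in> ks q" by (simp add: in_keys_iff)
        then have "\<gamma> \<le> \<alpha>" using le lq by (auto simp: lead_def)
        moreover have "lk p' \<alpha> = 0" using lq by (simp add: p'_def lookup_minus lookup_Const_mult lead_def)
        then have "\<gamma> \<noteq> \<alpha>" using g by (auto simp: in_keys_iff)
        ultimately show ?thesis by simp
      qed
      have p'M: "p' \<in> MM n"
      proof (cases "p' = 0")
        case True then show ?thesis by (simp add: ms_zero)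
      next
        case False
        define \<beta> where "\<beta> = Max (ks p')"
        have ne': "ks p' \<noteq> {}" using False by (metis keys_eq_empty)
        have "\<beta> \<in> ks p'" unfolding \<beta>_def by (rule Max_in[OF finite_keys ne'])
        then have \<beta>\<alpha>: "\<beta> < \<alpha>" by (rule p'keys)
        have sub: "{\<gamma>\<in>SD. \<gamma> \<le> \<beta>} \<subset> {\<gamma>\<in>SD. \<gamma> \<le> \<alpha>}"
        proof
          show "{\<gamma>\<in>SD. \<gamma> \<le> \<beta>} \<subseteq> {\<gamma>\<in>SD. \<gamma> \<le> \<alpha>}" using \<beta>\<alpha> by auto
          have "\<alpha> \<in> SD" using \<alpha>n \<alpha>D by (simp add: SD_def)
          then have "\<alpha> \<in> {\<gamma>\<in>SD. \<gamma> \<le> \<alpha>}" by simp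
          moreover have "\<alpha> \<notin> {\<gamma>\<in>SD. \<gamma> \<le> \<beta>}" using \<beta>\<alpha> by (simp add: not_le)
          ultimately show "{\<gamma>\<in>SD. \<gamma> \<le> \<beta>} \<noteq> {\<gamma>\<in>SD. \<gamma> \<le> \<alpha>}" by blast
        qed
        have "card {\<gamma>\<in>SD. \<gamma> \<le> \<beta>} < card {\<gamma>\<in>SD. \<gamma> \<le> \<alpha>}"
          by (rule psubset_card_mono) (use fin sub in auto)
        then have "card {\<gamma>\<in>SD. \<gamma> \<le> \<beta>} < K" using pK by (simp add: \<alpha>_def)
        then show ?thesis using less.IH p'R p'd False by (simp add: \<beta>_def)
      qed
      have eqp: "p = p' + Const (lk p \<alpha>) * q" by (simp add: p'_def)
      have "p' + Const (lk p \<alpha>) * q \<in> MM n" by (rule ms_add[OF p'M MM_Const_mult[OF qM]])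
      then show "p \<in> MM n" by (subst eqp)
    qed
  qed
  assume "p \<in> Rsym n" "degle D p"
  then show "p \<in> MM n" using main[of "card {\<gamma>\<in>SD. \<gamma> \<le> Max (ks p)}"] by (cases "p = 0") (auto simp: ms_zero)
qed

lemma main_all: "p \<in> Rsym n \<Longrightarrow> degle D p \<Longrightarrow> p \<in> MM n"
proof (induction D arbitrary: p rule: less_induct)
  case (less D)
  show ?case by (rule main_step[OF _ less.prems]) (use less.IH in blast)
qed

lemma Gen_Rsym: "g \<in> Gen n \<Longrightarrow> g \<in> Rsym n"
  unfolding Gen_def by (auto intro!: Rsym_prod Rsym_compl_sym)

lemma MM_Rsym: "x \<in> MM n \<Longrightarrow> x \<in> Rsym n"
proof -
  assume "x \<in> MM n"
  then have "\<exists>F r g. x = (\<Sum>i\<in>F. r i * g i) \<and> finite (F::nat set) \<and> (\<forall>i\<in>F. r i \<in> Rodd n \<and> g i \<in> Gen n)"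
    by (simp add: module_span_def)
  then obtain F r g where x: "x = (\<Sum>i\<in>(F::nat set). r i * g i)" "\<forall>i\<in>F. r i \<in> Rodd n \<and> g i \<in> Gen n"
    by blast
  show ?thesis unfolding x(1) using x(2) by (intro Rsym_sum Rsym_mult) (auto intro: Rodd_Rsym Gen_Rsym)
qed

theorem mainTheorem6:
  fixes n :: nat
  assumes "n \<ge> 1"
  shows "Rsym n = module_span (Rodd n)
           {(\<Prod>j<n div 2. compl_sym n (i j)) | i :: nat \<Rightarrow> nat. True}"
proof -
  have G: "{(\<Prod>j<n div 2. compl_sym n (i j)) | i :: nat \<Rightarrow> nat. True} = Gen n" by (simp add: Gen_def)
  have "Rsym n \<subseteq> MM n"
  proof
    fix p assume p: "p \<in> Rsym n"
    have "degle (Max (insert 0 (mdeg ` ks p))) p"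
      unfolding degle_def by (auto intro: Max_ge)
    then show "p \<in> MM n" using main_all p by blast
  qed
  moreover have "MM n \<subseteq> Rsym n" using MM_Rsym by blast
  ultimately show ?thesis unfolding G by blast
qed

end
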